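(* Let $A=\{A_m\}_{m=1}^{\mathsf{p}}\subset\mathcal{B}(\mathbb{C}^{D_1})$ and $B=\{B_m\}_{m=1}^{\mathsf{p}}\subset\mathcal{B}(\mathbb{C}^{D_2})$, and let $E_1=\sum_m\overline{A_m}\otimes A_m$, $E_2=\sum_m\overline{B_m}\otimes B_m$. Let $\psi_1\in \mathbb{C}^{D_1}$ and $\psi_2\in\mathbb{C}^{D_2}$ be unit vectors. Then for all $d\ge1$ and all $F\in\mathcal{B}((\mathbb{C}^{\mathsf{p}})^{\otimes d})$, \[ \|(E_F)^{\dagger} (\psi_1\otimes\psi_2)\| \leq \|F\| \sqrt{\|E_1^d\|\,\|E_2^d\|},\qquad \|E_F (\psi_1\otimes\psi_2)\| \leq \|F\| \sqrt{\|E_1^d\|\,\|E_2^d\|}, \] \[ \|E_F\|_F \leq D_1D_2 \|F\| \sqrt{\|E_1^d\|\,\|E_2^d\|}. \]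
   Context: For $Z\in\mathcal{B}(\mathbb{C}^\mathsf{p})$ define $E_Z=\sum_{m,m'=1}^{\mathsf{p}}\langle m|Z|m'\rangle\,\overline{A_m}\otimes B_{m'}\in\mathcal{B}(\mathbb{C}^{D_1}\otimes\mathbb{C}^{D_2})$ (overline denotes entrywise complex conjugation in the standard basis), and for $Z_1,\dots,Z_d\in\mathcal{B}(\mathbb{C}^\mathsf{p})$ set $E_{Z_1\otimes\cdots\otimes Z_d}=E_{Z_1}E_{Z_2}\cdots E_{Z_d}$; extend linearly to define $E_F$ for all $F\in\mathcal{B}((\mathbb{C}^\mathsf{p})^{\otimes d})$. $\|\cdot\|$ denotes the operator norm (Euclidean norm for vectors) and $\|\cdot\|_F$ the Frobenius norm. *)

theory Defs
  imports Complex_Main "Jordan_Normal_Form.Matrix" "Jordan_Normal_Form.Schur_Decomposition"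
begin

definition vnorm :: "complex vec \<Rightarrow> real" where
  "vnorm v = sqrt (\<Sum>i<dim_vec v. (cmod (v $ i))\<^sup>2)"

definition opnorm :: "complex mat \<Rightarrow> real" where
  "opnorm M = Sup {vnorm (M *\<^sub>v v) | v. v \<in> carrier_vec (dim_col M) \<and> vnorm v \<le> 1}"

definition frob :: "complex mat \<Rightarrow> real" where
  "frob M = sqrt (\<Sum>i<dim_row M. \<Sum>j<dim_col M. (cmod (M $$ (i,j)))\<^sup>2)"

definition conj_mat :: "complex mat \<Rightarrow> complex mat" where
  "conj_mat M = map_mat cnj M"

(* Kronecker (tensor) product, standard ordering: first factor most significant *)
definition kron :: "complex mat \<Rightarrow> complex mat \<Rightarrow> complex mat" where
  "kron M N = mat (dim_row M * dim_row N) (dim_col M * dim_col N)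
     (\<lambda>(i,j). M $$ (i div dim_row N, j div dim_col N) * N $$ (i mod dim_row N, j mod dim_col N))"

definition kron_vec :: "complex vec \<Rightarrow> complex vec \<Rightarrow> complex vec" where
  "kron_vec v w = vec (dim_vec v * dim_vec w) (\<lambda>i. v $ (i div dim_vec w) * w $ (i mod dim_vec w))"

(* E_Z = sum_{m,m'} <m|Z|m'> conj(A_m) (x) B_{m'}; indices m are 0-based: 0..p-1 *)
definition E_Z :: "nat \<Rightarrow> nat \<Rightarrow> nat \<Rightarrow> (nat \<Rightarrow> complex mat) \<Rightarrow> (nat \<Rightarrow> complex mat)
                   \<Rightarrow> complex mat \<Rightarrow> complex mat" where
  "E_Z D1 D2 p A B Z = mat (D1*D2) (D1*D2)
     (\<lambda>(i,j). \<Sum>m<p. \<Sum>m'<p. Z $$ (m,m') * kron (conj_mat (A m)) (B m') $$ (i,j))"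

(* E_{Z_1 (x) ... (x) Z_d} = E_{Z_1} ... E_{Z_d} *)
definition E_list :: "nat \<Rightarrow> nat \<Rightarrow> nat \<Rightarrow> (nat \<Rightarrow> complex mat) \<Rightarrow> (nat \<Rightarrow> complex mat)
                   \<Rightarrow> complex mat list \<Rightarrow> complex mat" where
  "E_list D1 D2 p A B Zs = foldr (\<lambda>Z M. E_Z D1 D2 p A B Z * M) Zs (1\<^sub>m (D1*D2))"

definition unit_mat :: "nat \<Rightarrow> nat \<Rightarrow> nat \<Rightarrow> complex mat" where
  "unit_mat p a b = mat p p (\<lambda>(i,j). if i = a \<and> j = b then 1 else 0)"

(* k-th tensor factor index (0-based, k < d) of basis index a < p^d of (C^p)^{(x)d},
   consistent with the Kronecker ordering (first factor most significant) *)
definition digit :: "nat \<Rightarrow> nat \<Rightarrow> nat \<Rightarrow> nat \<Rightarrow> nat" where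
  "digit p d k a = (a div p ^ (d - 1 - k)) mod p"

(* E_F by linear extension: F = sum_{a,b} F_{ab} |a><b| and
   |a><b| = (x)_k |a_k><b_k| *)
definition E_F :: "nat \<Rightarrow> nat \<Rightarrow> nat \<Rightarrow> nat \<Rightarrow> (nat \<Rightarrow> complex mat) \<Rightarrow> (nat \<Rightarrow> complex mat)
                   \<Rightarrow> complex mat \<Rightarrow> complex mat" where
  "E_F D1 D2 p d A B F = mat (D1*D2) (D1*D2)
     (\<lambda>(i,j). \<Sum>a<p^d. \<Sum>b<p^d. F $$ (a,b) *
        E_list D1 D2 p A B (map (\<lambda>k. unit_mat p (digit p d k a) (digit p d k b)) [0..<d]) $$ (i,j))"

definition transfer :: "nat \<Rightarrow> nat \<Rightarrow> (nat \<Rightarrow> complex mat) \<Rightarrow> complex mat" where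
  "transfer D p A = mat (D*D) (D*D) (\<lambda>(i,j). \<Sum>m<p. kron (conj_mat (A m)) (A m) $$ (i,j))"

end

theory Submission
  imports Defs "HOL-Analysis.Convex"
begin


lemma CS_cmod:
  fixes f g :: "'a \<Rightarrow> complex"
  shows "(cmod (\<Sum>i\<in>I. f i * g i))\<^sup>2 \<le> (\<Sum>i\<in>I. (cmod (f i))\<^sup>2) * (\<Sum>i\<in>I. (cmod (g i))\<^sup>2)"
proof -
  have "cmod (\<Sum>i\<in>I. f i * g i) \<le> (\<Sum>i\<in>I. cmod (f i) * cmod (g i))"
    using norm_sum[of "\<lambda>i. f i * g i" I] by (simp add: norm_mult)
  hence "(cmod (\<Sum>i\<in>I. f i * g i))\<^sup>2 \<le> (\<Sum>i\<in>I. cmod (f i) * cmod (g i))\<^sup>2"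
    by (simp add: power_mono)
  also have "\<dots> \<le> (\<Sum>i\<in>I. (cmod (f i))\<^sup>2) * (\<Sum>i\<in>I. (cmod (g i))\<^sup>2)" by (rule Cauchy_Schwarz_ineq_sum)
  finally show ?thesis .
qed

lemma CS_cmod':
  fixes f g :: "'a \<Rightarrow> complex"
  shows "cmod (\<Sum>i\<in>I. f i * g i) \<le> sqrt (\<Sum>i\<in>I. (cmod (f i))\<^sup>2) * sqrt (\<Sum>i\<in>I. (cmod (g i))\<^sup>2)"
  using CS_cmod[of f g I] 
  by (metis norm_ge_zero real_le_rsqrt real_sqrt_mult)

lemma vnorm_sq: "(vnorm v)\<^sup>2 = (\<Sum>i<dim_vec v. (cmod (v $ i))\<^sup>2)"
  unfolding vnorm_def by (simp add: sum_nonneg)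

lemma vnorm_nonneg: "vnorm v \<ge> 0"
  unfolding vnorm_def by (simp add: sum_nonneg)

lemma vnorm_vec: "vnorm (vec n f) = sqrt (\<Sum>i<n. (cmod (f i))\<^sup>2)"
  unfolding vnorm_def by simp

lemma mult_vec_sum: "M \<in> carrier_mat n m \<Longrightarrow> v \<in> carrier_vec m \<Longrightarrow> i < n \<Longrightarrow>
   (M *\<^sub>v v) $ i = (\<Sum>k<m. M $$ (i,k) * v $ k)"
  by (auto simp: scalar_prod_def lessThan_atLeast0 intro!: sum.cong)

lemma frob_nonneg: "frob M \<ge> 0" unfolding frob_def by (simp add: sum_nonneg)

lemma frob_bound:
  assumes M: "M \<in> carrier_mat n m" and v: "v \<in> carrier_vec m"
  shows "vnorm (M *\<^sub>v v) \<le> frob M * vnorm v"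
proof -
  have "(vnorm (M *\<^sub>v v))\<^sup>2 = (\<Sum>i<n. (cmod (\<Sum>k<m. M $$ (i,k) * v $ k))\<^sup>2)"
    using M v by (simp add: vnorm_sq mult_vec_sum[OF M v] del: index_mult_mat_vec)
  also have "\<dots> \<le> (\<Sum>i<n. (\<Sum>k<m. (cmod (M $$ (i,k)))\<^sup>2) * (\<Sum>k<m. (cmod (v $ k))\<^sup>2))"
    by (intro sum_mono CS_cmod)
  also have "\<dots> = (frob M)\<^sup>2 * (vnorm v)\<^sup>2"
    using M v unfolding frob_def by (simp add: vnorm_sq sum_distrib_right sum_nonneg)
  also have "\<dots> = (frob M * vnorm v)\<^sup>2" by (simp add: power_mult_distrib)
  finally show ?thesis
  proof (rule power2_le_imp_le[OF _ mult_nonneg_nonneg[OF _ vnorm_nonneg]])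
    show "0 \<le> frob M" unfolding frob_def by (simp add: sum_nonneg)
  qed
qed

lemma vnorm_smult: "vnorm (c \<cdot>\<^sub>v v) = cmod c * vnorm v"
  unfolding vnorm_def
  by (simp add: norm_mult power_mult_distrib sum_distrib_left[symmetric] real_sqrt_mult)

lemma vnorm_zero_iff: "v \<in> carrier_vec n \<Longrightarrow> vnorm v = 0 \<Longrightarrow> v = 0\<^sub>v n"
proof -
  assume v: "v \<in> carrier_vec n" and z: "vnorm v = 0"
  hence "(\<Sum>i<n. (cmod (v $ i))\<^sup>2) = 0" unfolding vnorm_def by simp
  hence "\<forall>i\<in>{..<n}. (cmod (v $ i))\<^sup>2 = 0"
    by (subst sum_nonneg_eq_0_iff[symmetric]) auto
  thus ?thesis using v by (intro eq_vecI) auto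
qed

definition opset where "opset M = {vnorm (M *\<^sub>v v) | v. v \<in> carrier_vec (dim_col M) \<and> vnorm v \<le> 1}"

lemma opset_bdd: "bdd_above (opset M)"
proof (rule bdd_aboveI)
  fix x assume "x \<in> opset M"
  then obtain v where v: "v \<in> carrier_vec (dim_col M)" "vnorm v \<le> 1" and x: "x = vnorm (M *\<^sub>v v)"
    unfolding opset_def by auto
  have "x \<le> frob M * vnorm v" unfolding x by (rule frob_bound[OF _ v(1)]) auto
  also have "\<dots> \<le> frob M" using v(2) frob_nonneg[of M] by (simp add: mult_left_le)
  finally show "x \<le> frob M" .
qed

lemma opnorm_opset: "opnorm M = Sup (opset M)" unfolding opnorm_def opset_def by simp

lemma opnorm_nonneg: "opnorm M \<ge> 0"
proof -
  have z: "vnorm (0\<^sub>v k) = 0" for k by (simp add: vnorm_def)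
  have mz: "M *\<^sub>v 0\<^sub>v (dim_col M) = 0\<^sub>v (dim_row M)"
    by (intro eq_vecI) (auto simp: scalar_prod_def)
  have "vnorm (M *\<^sub>v 0\<^sub>v (dim_col M)) \<in> opset M"
    unfolding opset_def using z by force
  moreover have "vnorm (M *\<^sub>v 0\<^sub>v (dim_col M)) = 0"
    using mz z by simp
  ultimately show ?thesis unfolding opnorm_opset
    by (metis cSup_upper opset_bdd)
qed

lemma opnorm_bound:
  assumes v: "v \<in> carrier_vec (dim_col M)"
  shows "vnorm (M *\<^sub>v v) \<le> opnorm M * vnorm v"
proof (cases "vnorm v = 0")
  case True
  hence "v = 0\<^sub>v (dim_col M)" using vnorm_zero_iff[OF v] by simp
  thus ?thesis by (simp add: vnorm_def)
next
  case False
  define c where "c = vnorm v"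
  have c: "c > 0" using False vnorm_nonneg[of v] unfolding c_def by simp
  define w where "w = complex_of_real (1 / c) \<cdot>\<^sub>v v"
  have wv: "w \<in> carrier_vec (dim_col M)" using v unfolding w_def by simp
  have wn: "vnorm w = 1" unfolding w_def vnorm_smult c_def[symmetric] using c by (simp add: norm_divide)
  have "vnorm (M *\<^sub>v w) \<in> opset M" unfolding opset_def using wv wn by auto
  hence le: "vnorm (M *\<^sub>v w) \<le> opnorm M" unfolding opnorm_opset
    by (metis cSup_upper opset_bdd)
  have "M *\<^sub>v w = complex_of_real (1 / c) \<cdot>\<^sub>v (M *\<^sub>v v)"
    unfolding w_def using v by (intro mult_mat_vec[of M "dim_row M" "dim_col M"]) auto
  hence "vnorm (M *\<^sub>v w) = vnorm (M *\<^sub>v v) / c" using c by (simp add: vnorm_smult norm_divide)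
  with le c show ?thesis unfolding c_def[symmetric] by (simp add: field_simps)
qed

lemma opsum:
  assumes F: "F \<in> carrier_mat N N"
  shows "(\<Sum>a<N. (cmod (\<Sum>k<N. F$$(a,k) * f k))\<^sup>2) \<le> (opnorm F)\<^sup>2 * (\<Sum>k<N. (cmod (f k))\<^sup>2)"
proof -
  define x where "x = vec N f"
  have x: "x \<in> carrier_vec (dim_col F)" using F unfolding x_def by simp
  have "vnorm (F *\<^sub>v x) \<le> opnorm F * vnorm x" by (rule opnorm_bound[OF x])
  hence "(vnorm (F *\<^sub>v x))\<^sup>2 \<le> (opnorm F * vnorm x)\<^sup>2"
    by (intro power_mono vnorm_nonneg)
  moreover have "(vnorm (F *\<^sub>v x))\<^sup>2 = (\<Sum>a<N. (cmod (\<Sum>k<N. F$$(a,k) * f k))\<^sup>2)"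
    unfolding vnorm_sq using F
    by (intro sum.cong) (auto simp: mult_vec_sum[OF F] x_def simp del: index_mult_mat_vec)
  moreover have "(opnorm F * vnorm x)\<^sup>2 = (opnorm F)\<^sup>2 * (\<Sum>k<N. (cmod (f k))\<^sup>2)"
    unfolding power_mult_distrib vnorm_sq x_def by simp
  ultimately show ?thesis by simp
qed

lemma opsum_cnj:
  assumes F: "F \<in> carrier_mat N N"
  shows "(\<Sum>a<N. (cmod (\<Sum>k<N. cnj (F$$(a,k)) * f k))\<^sup>2) \<le> (opnorm F)\<^sup>2 * (\<Sum>k<N. (cmod (f k))\<^sup>2)"
proof -
  have "cmod (\<Sum>k<N. cnj (F$$(a,k)) * f k) = cmod (\<Sum>k<N. F$$(a,k) * cnj (f k))" for a
  proof -
    have "(\<Sum>k<N. cnj (F$$(a,k)) * f k) = cnj (\<Sum>k<N. F$$(a,k) * cnj (f k))" by simp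
    thus ?thesis by (metis complex_mod_cnj)
  qed
  hence "(\<Sum>a<N. (cmod (\<Sum>k<N. cnj (F$$(a,k)) * f k))\<^sup>2) = (\<Sum>a<N. (cmod (\<Sum>k<N. F$$(a,k) * cnj (f k)))\<^sup>2)"
    by simp
  also have "\<dots> \<le> (opnorm F)\<^sup>2 * (\<Sum>k<N. (cmod (cnj (f k)))\<^sup>2)" by (rule opsum[OF F])
  finally show ?thesis by simp
qed

lemma cnorm_sq: "complex_of_real ((cmod w)\<^sup>2) = w * cnj w"
  using complex_norm_square[of w] by simp

lemma adj_index: "M \<in> carrier_mat n m \<Longrightarrow> mat_adjoint M = mat m n (\<lambda>(i,j). cnj (M $$ (j,i)))"
  unfolding mat_adjoint_def mat_of_rows_def by (intro eq_matI) auto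

lemma adj_bound:
  assumes M: "M \<in> carrier_mat n n" and y: "y \<in> carrier_vec n"
  shows "vnorm (mat_adjoint M *\<^sub>v y) \<le> opnorm M * vnorm y"
proof -
  define z where "z = mat_adjoint M *\<^sub>v y"
  have A: "mat_adjoint M \<in> carrier_mat n n" using adj_index[OF M] by simp
  have z: "z \<in> carrier_vec n" unfolding z_def using A by (auto intro!: carrier_vecI)
  have zi: "z $ i = (\<Sum>j<n. cnj (M $$ (j,i)) * y $ j)" if "i < n" for i
    unfolding z_def using mult_vec_sum[OF A y that] adj_index[OF M] that by simp
  have Mz: "(M *\<^sub>v z) $ j = (\<Sum>i<n. M $$ (j,i) * z $ i)" if "j < n" for j
    using mult_vec_sum[OF M z that] .
  have "complex_of_real ((vnorm z)\<^sup>2) = (\<Sum>i<n. z $ i * cnj (z $ i))"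
    unfolding vnorm_sq of_real_sum cnorm_sq using z by simp
  also have "\<dots> = (\<Sum>i<n. \<Sum>j<n. cnj (M $$ (j,i)) * y $ j * cnj (z $ i))"
    by (intro sum.cong) (auto simp: zi sum_distrib_right)
  also have "\<dots> = (\<Sum>j<n. \<Sum>i<n. cnj (M $$ (j,i)) * y $ j * cnj (z $ i))"
    by (rule sum.swap)
  also have "\<dots> = (\<Sum>j<n. y $ j * cnj ((M *\<^sub>v z) $ j))"
    by (intro sum.cong) (auto simp: Mz sum_distrib_left mult_ac)
  finally have eq: "(vnorm z)\<^sup>2 = cmod (\<Sum>j<n. y $ j * cnj ((M *\<^sub>v z) $ j))"
    by (metis norm_of_real abs_of_nonneg zero_le_power2)
  also have "\<dots> \<le> sqrt (\<Sum>j<n. (cmod (y $ j))\<^sup>2) * sqrt (\<Sum>j<n. (cmod (cnj ((M *\<^sub>v z) $ j)))\<^sup>2)"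
    by (rule CS_cmod')
  also have "\<dots> = vnorm y * vnorm (M *\<^sub>v z)"
    unfolding vnorm_def using y M by simp
  also have "\<dots> \<le> vnorm y * (opnorm M * vnorm z)"
    by (intro mult_left_mono opnorm_bound vnorm_nonneg) (use z M in auto)
  finally have "vnorm z * vnorm z \<le> (opnorm M * vnorm y) * vnorm z"
    by (simp add: power2_eq_square mult_ac)
  hence "vnorm z \<le> opnorm M * vnorm y"
    using vnorm_nonneg[of z] opnorm_nonneg[of M] vnorm_nonneg[of y]
    by (metis mult_right_le_imp_le le_less mult_nonneg_nonneg)
  thus ?thesis unfolding z_def .
qed



lemma swap4: "(\<Sum>i\<in>I. \<Sum>j\<in>J. \<Sum>a\<in>A. \<Sum>b\<in>B. f i j a b) = (\<Sum>a\<in>A. \<Sum>b\<in>B. \<Sum>i\<in>I. \<Sum>j\<in>J. f i j a b)"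
proof -
  have "(\<Sum>i\<in>I. \<Sum>j\<in>J. \<Sum>a\<in>A. \<Sum>b\<in>B. f i j a b) = (\<Sum>i\<in>I. \<Sum>a\<in>A. \<Sum>b\<in>B. \<Sum>j\<in>J. f i j a b)"
  proof (rule sum.cong[OF refl])
    fix i
    have "(\<Sum>j\<in>J. \<Sum>a\<in>A. \<Sum>b\<in>B. f i j a b) = (\<Sum>a\<in>A. \<Sum>j\<in>J. \<Sum>b\<in>B. f i j a b)" by (rule sum.swap)
    also have "\<dots> = (\<Sum>a\<in>A. \<Sum>b\<in>B. \<Sum>j\<in>J. f i j a b)" by (rule sum.cong[OF refl], rule sum.swap)
    finally show "(\<Sum>j\<in>J. \<Sum>a\<in>A. \<Sum>b\<in>B. f i j a b) = (\<Sum>a\<in>A. \<Sum>b\<in>B. \<Sum>j\<in>J. f i j a b)" .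
  qed
  also have "\<dots> = (\<Sum>a\<in>A. \<Sum>i\<in>I. \<Sum>b\<in>B. \<Sum>j\<in>J. f i j a b)" by (rule sum.swap)
  also have "\<dots> = (\<Sum>a\<in>A. \<Sum>b\<in>B. \<Sum>i\<in>I. \<Sum>j\<in>J. f i j a b)" by (rule sum.cong[OF refl], rule sum.swap)
  finally show ?thesis .
qed

lemma swap3: "(\<Sum>j\<in>J. \<Sum>a\<in>A. \<Sum>b\<in>B. f j a b) = (\<Sum>a\<in>A. \<Sum>b\<in>B. \<Sum>j\<in>J. f j a b)"
proof -
  have "(\<Sum>j\<in>J. \<Sum>a\<in>A. \<Sum>b\<in>B. f j a b) = (\<Sum>a\<in>A. \<Sum>j\<in>J. \<Sum>b\<in>B. f j a b)" by (rule sum.swap)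
  also have "\<dots> = (\<Sum>a\<in>A. \<Sum>b\<in>B. \<Sum>j\<in>J. f j a b)" by (rule sum.cong[OF refl], rule sum.swap)
  finally show ?thesis .
qed

lemma step1:
  fixes Fm u w :: "nat \<Rightarrow> nat \<Rightarrow> complex"
  shows "complex_of_real (\<Sum>i<n1. \<Sum>j<n2. (cmod (\<Sum>a<N. \<Sum>b<N. Fm a b * u a i * w b j))\<^sup>2)
     = (\<Sum>a<N. \<Sum>a'<N. (\<Sum>i<n1. cnj (u a i) * u a' i) *
          (\<Sum>b<N. cnj (Fm a b) * (\<Sum>b'<N. Fm a' b' * (\<Sum>j<n2. cnj (w b j) * w b' j))))"
proof -
  define P where "P a j = (\<Sum>b<N. Fm a b * w b j)" for a j
  have S: "(\<Sum>a<N. \<Sum>b<N. Fm a b * u a i * w b j) = (\<Sum>a<N. u a i * P a j)" for i j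
    unfolding P_def by (simp add: sum_distrib_left mult_ac)
  have H: "(\<Sum>j<n2. cnj (P a j) * P a' j) = (\<Sum>b<N. cnj (Fm a b) * (\<Sum>b'<N. Fm a' b' * (\<Sum>j<n2. cnj (w b j) * w b' j)))" for a a'
  proof -
    have "(\<Sum>j<n2. cnj (P a j) * P a' j) = (\<Sum>j<n2. \<Sum>b<N. \<Sum>b'<N. cnj (Fm a b) * Fm a' b' * (cnj (w b j) * w b' j))"
      unfolding P_def by (intro sum.cong refl) (simp only: cnj_sum sum_product, simp add: mult_ac)
    also have "\<dots> = (\<Sum>b<N. \<Sum>b'<N. \<Sum>j<n2. cnj (Fm a b) * Fm a' b' * (cnj (w b j) * w b' j))"
      by (rule swap3)
    also have "\<dots> = (\<Sum>b<N. cnj (Fm a b) * (\<Sum>b'<N. Fm a' b' * (\<Sum>j<n2. cnj (w b j) * w b' j)))"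
      by (simp add: sum_distrib_left mult_ac)
    finally show ?thesis .
  qed
  have "complex_of_real (\<Sum>i<n1. \<Sum>j<n2. (cmod (\<Sum>a<N. \<Sum>b<N. Fm a b * u a i * w b j))\<^sup>2)
     = (\<Sum>i<n1. \<Sum>j<n2. cnj (\<Sum>a<N. u a i * P a j) * (\<Sum>a'<N. u a' i * P a' j))"
    unfolding of_real_sum cnorm_sq S by (simp add: mult.commute)
  also have "\<dots> = (\<Sum>i<n1. \<Sum>j<n2. \<Sum>a<N. \<Sum>a'<N. (cnj (u a i) * u a' i) * (cnj (P a j) * P a' j))"
    by (intro sum.cong refl) (simp only: cnj_sum sum_product, simp add: mult_ac)
  also have "\<dots> = (\<Sum>a<N. \<Sum>a'<N. \<Sum>i<n1. \<Sum>j<n2. (cnj (u a i) * u a' i) * (cnj (P a j) * P a' j))"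
    by (rule swap4)
  also have "\<dots> = (\<Sum>a<N. \<Sum>a'<N. (\<Sum>i<n1. cnj (u a i) * u a' i) * (\<Sum>j<n2. cnj (P a j) * P a' j))"
    by (simp add: sum_product)
  also have "\<dots> = (\<Sum>a<N. \<Sum>a'<N. (\<Sum>i<n1. cnj (u a i) * u a' i) *
          (\<Sum>b<N. cnj (Fm a b) * (\<Sum>b'<N. Fm a' b' * (\<Sum>j<n2. cnj (w b j) * w b' j))))"
    by (simp add: H)
  finally show ?thesis .
qed

lemma gram_u:
  fixes u :: "nat \<Rightarrow> nat \<Rightarrow> complex"
  shows "(\<Sum>a<N. \<Sum>a'<N. (cmod (\<Sum>i<n1. cnj (u a i) * u a' i))\<^sup>2)
       = (\<Sum>i<n1. \<Sum>i'<n1. (cmod (\<Sum>a<N. u a i * cnj (u a i')))\<^sup>2)"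
proof -
  have "complex_of_real (\<Sum>a<N. \<Sum>a'<N. (cmod (\<Sum>i<n1. cnj (u a i) * u a' i))\<^sup>2)
     = (\<Sum>a<N. \<Sum>a'<N. \<Sum>i<n1. \<Sum>i'<n1. (cnj (u a i) * u a' i) * (u a i' * cnj (u a' i')))"
    unfolding of_real_sum cnorm_sq
    by (intro sum.cong refl) (simp only: cnj_sum sum_product, simp add: mult_ac)
  also have "\<dots> = (\<Sum>a<N. \<Sum>a'<N. \<Sum>i'<n1. \<Sum>i<n1. (cnj (u a i) * u a' i) * (u a i' * cnj (u a' i')))"
    by (intro sum.cong refl sum.swap)
  also have "\<dots> = (\<Sum>i'<n1. \<Sum>i<n1. \<Sum>a<N. \<Sum>a'<N. (cnj (u a i) * u a' i) * (u a i' * cnj (u a' i')))"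
    by (rule swap4[symmetric])
  also have "\<dots> = complex_of_real (\<Sum>i<n1. \<Sum>i'<n1. (cmod (\<Sum>a<N. u a i * cnj (u a i')))\<^sup>2)"
    unfolding of_real_sum cnorm_sq
    by (intro sum.cong refl) (simp only: cnj_sum sum_product, simp add: mult_ac)
  finally show ?thesis by (simp only: of_real_eq_iff)
qed

lemma gram_w:
  fixes w :: "nat \<Rightarrow> nat \<Rightarrow> complex"
  shows "(\<Sum>b<N. \<Sum>b'<N. (cmod (\<Sum>j<n2. cnj (w b j) * w b' j))\<^sup>2)
       = (\<Sum>j<n2. \<Sum>j'<n2. (cmod (\<Sum>b<N. cnj (w b j) * w b j'))\<^sup>2)"
proof -
  have "complex_of_real (\<Sum>b<N. \<Sum>b'<N. (cmod (\<Sum>j<n2. cnj (w b j) * w b' j))\<^sup>2)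
     = (\<Sum>b<N. \<Sum>b'<N. \<Sum>j<n2. \<Sum>j'<n2. (cnj (w b j) * w b' j) * (w b j' * cnj (w b' j')))"
    unfolding of_real_sum cnorm_sq
    by (intro sum.cong refl) (simp only: cnj_sum sum_product, simp add: mult_ac)
  also have "\<dots> = (\<Sum>j<n2. \<Sum>j'<n2. \<Sum>b<N. \<Sum>b'<N. (cnj (w b j) * w b' j) * (w b j' * cnj (w b' j')))"
    by (rule swap4[symmetric])
  also have "\<dots> = complex_of_real (\<Sum>j<n2. \<Sum>j'<n2. (cmod (\<Sum>b<N. cnj (w b j) * w b j'))\<^sup>2)"
    unfolding of_real_sum cnorm_sq
    by (intro sum.cong refl) (simp only: cnj_sum sum_product, simp add: mult_ac)
  finally show ?thesis by (simp only: of_real_eq_iff)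
qed



lemma dbl: "(\<Sum>a\<in>A. \<Sum>b\<in>B. h a b) = (\<Sum>x\<in>A\<times>B. h (fst x) (snd x))"
  by (subst sum.cartesian_product) (simp add: split_def)

lemma core:
  fixes Fm u w :: "nat \<Rightarrow> nat \<Rightarrow> complex" and c :: real
  assumes c: "c \<ge> 0"
  and h1: "\<And>f. (\<Sum>a<N. (cmod (\<Sum>k<N. Fm a k * f k))\<^sup>2) \<le> c\<^sup>2 * (\<Sum>k<N. (cmod (f k))\<^sup>2)"
  and h2: "\<And>f. (\<Sum>a<N. (cmod (\<Sum>k<N. cnj (Fm a k) * f k))\<^sup>2) \<le> c\<^sup>2 * (\<Sum>k<N. (cmod (f k))\<^sup>2)"
  shows "(\<Sum>i<n1. \<Sum>j<n2. (cmod (\<Sum>a<N. \<Sum>b<N. Fm a b * u a i * w b j))\<^sup>2)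
    \<le> c\<^sup>2 * (sqrt (\<Sum>i<n1. \<Sum>i'<n1. (cmod (\<Sum>a<N. u a i * cnj (u a i')))\<^sup>2) *
               sqrt (\<Sum>j<n2. \<Sum>j'<n2. (cmod (\<Sum>b<N. cnj (w b j) * w b j'))\<^sup>2))"
proof -
  define G where "G a a' = (\<Sum>i<n1. cnj (u a i) * u a' i)" for a a'
  define K where "K b b' = (\<Sum>j<n2. cnj (w b j) * w b' j)" for b b'
  define C where "C a' b = (\<Sum>b'<N. Fm a' b' * K b b')" for a' b
  define M where "M a a' = (\<Sum>b<N. cnj (Fm a b) * C a' b)" for a a'
  define L where "L = (\<Sum>i<n1. \<Sum>j<n2. (cmod (\<Sum>a<N. \<Sum>b<N. Fm a b * u a i * w b j))\<^sup>2)"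
  define Gs where "Gs = (\<Sum>a<N. \<Sum>a'<N. (cmod (G a a'))\<^sup>2)"
  define Ms where "Ms = (\<Sum>a<N. \<Sum>a'<N. (cmod (M a a'))\<^sup>2)"
  define Ks where "Ks = (\<Sum>b<N. \<Sum>b'<N. (cmod (K b b'))\<^sup>2)"
  have L0: "L \<ge> 0" unfolding L_def by (simp add: sum_nonneg)
  have Ks0: "Ks \<ge> 0" unfolding Ks_def by (simp add: sum_nonneg)
  have "complex_of_real L = (\<Sum>a<N. \<Sum>a'<N. G a a' * M a a')"
    unfolding L_def G_def M_def C_def K_def by (rule step1)
  moreover have "cmod (complex_of_real L) = L" using L0 by simp
  ultimately have "L = cmod (\<Sum>a<N. \<Sum>a'<N. G a a' * M a a')" by simp
  also have "\<dots> = cmod (\<Sum>x\<in>{..<N}\<times>{..<N}. G (fst x) (snd x) * M (fst x) (snd x))"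
    by (simp only: dbl)
  also have "\<dots> \<le> sqrt (\<Sum>x\<in>{..<N}\<times>{..<N}. (cmod (G (fst x) (snd x)))\<^sup>2) *
                   sqrt (\<Sum>x\<in>{..<N}\<times>{..<N}. (cmod (M (fst x) (snd x)))\<^sup>2)"
    by (rule CS_cmod')
  also have "\<dots> = sqrt Gs * sqrt Ms"
    unfolding Gs_def Ms_def by (simp only: dbl)
  finally have L1: "L \<le> sqrt Gs * sqrt Ms" .
  have "Ms = (\<Sum>a'<N. \<Sum>a<N. (cmod (M a a'))\<^sup>2)"
    unfolding Ms_def by (rule sum.swap)
  also have "\<dots> \<le> (\<Sum>a'<N. c\<^sup>2 * (\<Sum>b<N. (cmod (C a' b))\<^sup>2))"
    unfolding M_def by (intro sum_mono h2)
  also have "\<dots> = c\<^sup>2 * (\<Sum>a'<N. \<Sum>b<N. (cmod (C a' b))\<^sup>2)"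
    by (simp only: sum_distrib_left[symmetric])
  also have "\<dots> = c\<^sup>2 * (\<Sum>b<N. \<Sum>a'<N. (cmod (C a' b))\<^sup>2)"
    by (rule arg_cong[where f="\<lambda>x. c\<^sup>2 * x"], rule sum.swap)
  also have "\<dots> \<le> c\<^sup>2 * (\<Sum>b<N. c\<^sup>2 * (\<Sum>b'<N. (cmod (K b b'))\<^sup>2))"
    unfolding C_def by (intro mult_left_mono sum_mono h1) simp
  also have "\<dots> = (c\<^sup>2)\<^sup>2 * Ks"
    unfolding Ks_def by (simp add: sum_distrib_left power2_eq_square mult_ac)
  finally have "Ms \<le> (c\<^sup>2)\<^sup>2 * Ks" .
  hence "sqrt Ms \<le> sqrt ((c\<^sup>2)\<^sup>2 * Ks)" by simp
  also have "\<dots> = c\<^sup>2 * sqrt Ks" by (simp only: real_sqrt_mult real_sqrt_abs abs_power2)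
  finally have M1: "sqrt Ms \<le> c\<^sup>2 * sqrt Ks" .
  have Gs0: "Gs \<ge> 0" unfolding Gs_def by (simp add: sum_nonneg)
  have "L \<le> sqrt Gs * (c\<^sup>2 * sqrt Ks)"
    using L1 mult_left_mono[OF M1 real_sqrt_ge_zero[OF Gs0]] by (rule order_trans)
  moreover have "Gs = (\<Sum>i<n1. \<Sum>i'<n1. (cmod (\<Sum>a<N. u a i * cnj (u a i')))\<^sup>2)"
    unfolding Gs_def G_def by (rule gram_u)
  moreover have "Ks = (\<Sum>j<n2. \<Sum>j'<n2. (cmod (\<Sum>b<N. cnj (w b j) * w b j'))\<^sup>2)"
    unfolding Ks_def K_def by (rule gram_w)
  ultimately show ?thesis unfolding L_def by (simp add: mult_ac)
qed



lemma sum_shift: "sum h {m..<m+k} = (\<Sum>b<k. h (m+b))" for m k :: nat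
  using sum.shift_bounds_nat_ivl[of h 0 m k] by (simp add: add.commute lessThan_atLeast0)

lemma sum_split: fixes n1 n2 :: nat shows "(\<Sum>i<n1*n2. h i) = (\<Sum>a<n1. \<Sum>b<n2. h (a*n2+b))"
proof -
  have "(\<Sum>i<n1*n2. h i) = (\<Sum>a<n1. sum h {a*n2..<a*n2+n2})" by (rule sum.nat_group[symmetric])
  also have "\<dots> = (\<Sum>a<n1. \<Sum>b<n2. h (a*n2+b))"
    by (simp add: sum_shift)
  finally show ?thesis .
qed

lemma sum_divmod: fixes n1 n2 :: nat shows "(\<Sum>i<n1*n2. h (i div n2) (i mod n2)) = (\<Sum>a<n1. \<Sum>b<n2. h a b)"
proof -
  have "(\<Sum>i<n1*n2. h (i div n2) (i mod n2)) = (\<Sum>a<n1. \<Sum>b<n2. h ((a*n2+b) div n2) ((a*n2+b) mod n2))"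
    by (rule sum_split)
  also have "\<dots> = (\<Sum>a<n1. \<Sum>b<n2. h a b)" by (intro sum.cong refl) simp
  finally show ?thesis .
qed

lemma vnorm_sq_vec_divmod: fixes n1 n2 :: nat shows
  "(vnorm (vec (n1*n2) (\<lambda>i. f (i div n2) (i mod n2))))\<^sup>2 = (\<Sum>a<n1. \<Sum>b<n2. (cmod (f a b))\<^sup>2)"
proof -
  have "(vnorm (vec (n1*n2) (\<lambda>i. f (i div n2) (i mod n2))))\<^sup>2 = (\<Sum>i<n1*n2. (cmod (f (i div n2) (i mod n2)))\<^sup>2)"
    unfolding vnorm_sq by simp
  also have "\<dots> = (\<Sum>a<n1. \<Sum>b<n2. (cmod (f a b))\<^sup>2)" by (rule sum_divmod)
  finally show ?thesis .
qed

lemma main_bound: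
  fixes Fm u w :: "nat \<Rightarrow> nat \<Rightarrow> complex" and c t1 t2 :: real
  assumes c: "c \<ge> 0"
  and h1: "\<And>f. (\<Sum>a<N. (cmod (\<Sum>k<N. Fm a k * f k))\<^sup>2) \<le> c\<^sup>2 * (\<Sum>k<N. (cmod (f k))\<^sup>2)"
  and h2: "\<And>f. (\<Sum>a<N. (cmod (\<Sum>k<N. cnj (Fm a k) * f k))\<^sup>2) \<le> c\<^sup>2 * (\<Sum>k<N. (cmod (f k))\<^sup>2)"
  and t1: "vnorm (vec (n1*n1) (\<lambda>i. \<Sum>a<N. u a (i div n1) * cnj (u a (i mod n1)))) \<le> t1"
  and t2: "vnorm (vec (n2*n2) (\<lambda>i. \<Sum>b<N. cnj (w b (i div n2)) * w b (i mod n2))) \<le> t2"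
  shows "vnorm (vec (n1*n2) (\<lambda>i. \<Sum>a<N. \<Sum>b<N. Fm a b * u a (i div n2) * w b (i mod n2))) \<le> c * sqrt (t1 * t2)"
proof -
  have e1: "vnorm (vec (n1*n1) (\<lambda>i. \<Sum>a<N. u a (i div n1) * cnj (u a (i mod n1))))
     = sqrt (\<Sum>i<n1. \<Sum>i'<n1. (cmod (\<Sum>a<N. u a i * cnj (u a i')))\<^sup>2)"
    using sum_divmod[of "\<lambda>i i'. (cmod (\<Sum>a<N. u a i * cnj (u a i')))\<^sup>2" n1 n1] by (simp add: vnorm_vec)
  have e2: "vnorm (vec (n2*n2) (\<lambda>i. \<Sum>b<N. cnj (w b (i div n2)) * w b (i mod n2)))
     = sqrt (\<Sum>j<n2. \<Sum>j'<n2. (cmod (\<Sum>b<N. cnj (w b j) * w b j'))\<^sup>2)"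
    using sum_divmod[of "\<lambda>j j'. (cmod (\<Sum>b<N. cnj (w b j) * w b j'))\<^sup>2" n2 n2] by (simp add: vnorm_vec)
  define V where "V = vec (n1*n2) (\<lambda>i. \<Sum>a<N. \<Sum>b<N. Fm a b * u a (i div n2) * w b (i mod n2))"
  have "(vnorm V)\<^sup>2 = (\<Sum>i<n1. \<Sum>j<n2. (cmod (\<Sum>a<N. \<Sum>b<N. Fm a b * u a i * w b j))\<^sup>2)"
    unfolding V_def by (rule vnorm_sq_vec_divmod)
  also have "\<dots> \<le> c\<^sup>2 * (sqrt (\<Sum>i<n1. \<Sum>i'<n1. (cmod (\<Sum>a<N. u a i * cnj (u a i')))\<^sup>2) *
               sqrt (\<Sum>j<n2. \<Sum>j'<n2. (cmod (\<Sum>b<N. cnj (w b j) * w b j'))\<^sup>2))"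
    by (rule core[OF c h1 h2])
  also have "\<dots> \<le> c\<^sup>2 * (t1 * t2)"
    unfolding e1[symmetric] e2[symmetric]
    by (intro mult_left_mono mult_mono t1 t2 vnorm_nonneg) (use order_trans[OF vnorm_nonneg t1] in auto)
  finally have "(vnorm V)\<^sup>2 \<le> c\<^sup>2 * (t1 * t2)" .
  hence "sqrt ((vnorm V)\<^sup>2) \<le> sqrt (c\<^sup>2 * (t1 * t2))" by (rule real_sqrt_le_mono)
  hence "vnorm V \<le> c * sqrt (t1 * t2)"
    using c vnorm_nonneg[of V] by (simp only: real_sqrt_mult real_sqrt_abs abs_of_nonneg)
  thus ?thesis unfolding V_def .
qed



lemma kron_carrier: "X \<in> carrier_mat n1 n1 \<Longrightarrow> Y \<in> carrier_mat n2 n2 \<Longrightarrow> kron X Y \<in> carrier_mat (n1*n2) (n1*n2)"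
  unfolding kron_def by auto

lemma kron_index: "X \<in> carrier_mat n1 n1 \<Longrightarrow> Y \<in> carrier_mat n2 n2 \<Longrightarrow> i < n1*n2 \<Longrightarrow> j < n1*n2 \<Longrightarrow>
  kron X Y $$ (i,j) = X $$ (i div n2, j div n2) * Y $$ (i mod n2, j mod n2)"
  unfolding kron_def by auto

lemma mult_mat_sum: "A \<in> carrier_mat n m \<Longrightarrow> B \<in> carrier_mat m l \<Longrightarrow> i < n \<Longrightarrow> j < l \<Longrightarrow>
  (A * B) $$ (i,j) = (\<Sum>k<m. A $$ (i,k) * B $$ (k,j))"
  by (auto simp: scalar_prod_def lessThan_atLeast0 intro!: sum.cong)

lemma divmod_bounds: fixes i n1 n2 :: nat shows "i < n1*n2 \<Longrightarrow> i div n2 < n1 \<and> i mod n2 < n2"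
  by (metis less_mult_imp_div_less mod_less_divisor mult_zero_right not_gr_zero not_less_zero)

lemma kron_mult:
  assumes X: "X \<in> carrier_mat n1 n1" "X' \<in> carrier_mat n1 n1"
    and Y: "Y \<in> carrier_mat n2 n2" "Y' \<in> carrier_mat n2 n2"
  shows "kron X Y * kron X' Y' = kron (X*X') (Y*Y')"
proof (rule eq_matI)
  have K: "kron X Y \<in> carrier_mat (n1*n2) (n1*n2)" "kron X' Y' \<in> carrier_mat (n1*n2) (n1*n2)"
    "kron (X*X') (Y*Y') \<in> carrier_mat (n1*n2) (n1*n2)"
    using X Y by (auto intro!: kron_carrier)
  show "dim_row (kron X Y * kron X' Y') = dim_row (kron (X*X') (Y*Y'))"
    "dim_col (kron X Y * kron X' Y') = dim_col (kron (X*X') (Y*Y'))" using K by auto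
  fix i j assume "i < dim_row (kron (X*X') (Y*Y'))" "j < dim_col (kron (X*X') (Y*Y'))"
  hence i: "i < n1*n2" and j: "j < n1*n2" using K by auto
  note ib = divmod_bounds[OF i] and jb = divmod_bounds[OF j]
  have "(kron X Y * kron X' Y') $$ (i,j) = (\<Sum>k<n1*n2. kron X Y $$ (i,k) * kron X' Y' $$ (k,j))"
    by (rule mult_mat_sum[OF K(1,2) i j])
  also have "\<dots> = (\<Sum>k<n1*n2. (X $$ (i div n2, k div n2) * Y $$ (i mod n2, k mod n2)) *
      (X' $$ (k div n2, j div n2) * Y' $$ (k mod n2, j mod n2)))"
    by (intro sum.cong refl) (simp add: kron_index[OF X(1) Y(1) i] kron_index[OF X(2) Y(2) _ j])
  also have "\<dots> = (\<Sum>a<n1. \<Sum>b<n2. (X $$ (i div n2, a) * Y $$ (i mod n2, b)) *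
      (X' $$ (a, j div n2) * Y' $$ (b, j mod n2)))"
    by (rule sum_divmod[where h="\<lambda>a b. (X $$ (i div n2, a) * Y $$ (i mod n2, b)) *
      (X' $$ (a, j div n2) * Y' $$ (b, j mod n2))"])
  also have "\<dots> = (\<Sum>a<n1. X $$ (i div n2, a) * X' $$ (a, j div n2)) * (\<Sum>b<n2. Y $$ (i mod n2, b) * Y' $$ (b, j mod n2))"
    by (simp add: sum_product mult_ac)
  also have "\<dots> = (X*X') $$ (i div n2, j div n2) * (Y*Y') $$ (i mod n2, j mod n2)"
    using ib jb by (simp add: mult_mat_sum[OF X] mult_mat_sum[OF Y])
  also have "\<dots> = kron (X*X') (Y*Y') $$ (i,j)"
    using X Y i j by (simp add: kron_index[of _ n1 _ n2])
  finally show "(kron X Y * kron X' Y') $$ (i,j) = kron (X*X') (Y*Y') $$ (i,j)" .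
qed

lemma kron_one: "kron (1\<^sub>m n1) (1\<^sub>m n2) = 1\<^sub>m (n1*n2)"
proof (rule eq_matI)
  fix i j assume "i < dim_row (1\<^sub>m (n1*n2))" "j < dim_col (1\<^sub>m (n1*n2))"
  hence i: "i < n1*n2" and j: "j < n1*n2" by auto
  note ib = divmod_bounds[OF i] and jb = divmod_bounds[OF j]
  have "(i div n2 = j div n2 \<and> i mod n2 = j mod n2) = (i = j)"
    by (metis div_mult_mod_eq)
  thus "kron (1\<^sub>m n1) (1\<^sub>m n2) $$ (i,j) = 1\<^sub>m (n1*n2) $$ (i,j)"
    using ib jb i j by (auto simp: kron_index[of _ n1 _ n2])
qed (auto simp: kron_def)

lemma foldr_carrier: "(\<forall>k\<in>set ks. g k \<in> carrier_mat n n) \<Longrightarrow> foldr (\<lambda>k M. g k * M) ks (1\<^sub>m n) \<in> carrier_mat n n"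
  by (induction ks) auto

lemma foldr_kron:
  "(\<forall>k\<in>set ks. f k \<in> carrier_mat n1 n1 \<and> g k \<in> carrier_mat n2 n2) \<Longrightarrow>
   foldr (\<lambda>k M. kron (f k) (g k) * M) ks (1\<^sub>m (n1*n2)) =
   kron (foldr (\<lambda>k M. f k * M) ks (1\<^sub>m n1)) (foldr (\<lambda>k M. g k * M) ks (1\<^sub>m n2))"
proof (induction ks)
  case Nil
  then show ?case by (simp add: kron_one)
next
  case (Cons k ks)
  have c1: "foldr (\<lambda>k M. f k * M) ks (1\<^sub>m n1) \<in> carrier_mat n1 n1"
    using Cons.prems by (intro foldr_carrier) auto
  have c2: "foldr (\<lambda>k M. g k * M) ks (1\<^sub>m n2) \<in> carrier_mat n2 n2"
    using Cons.prems by (intro foldr_carrier) auto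
  have fk: "f k \<in> carrier_mat n1 n1" "g k \<in> carrier_mat n2 n2" using Cons.prems by auto
  have IH: "foldr (\<lambda>k M. kron (f k) (g k) * M) ks (1\<^sub>m (n1*n2)) =
   kron (foldr (\<lambda>k M. f k * M) ks (1\<^sub>m n1)) (foldr (\<lambda>k M. g k * M) ks (1\<^sub>m n2))"
    using Cons.IH Cons.prems by auto
  show ?case using IH by (simp add: kron_mult[OF fk(1) c1 fk(2) c2])
qed

lemma conj_mat_carrier: "X \<in> carrier_mat n m \<Longrightarrow> conj_mat X \<in> carrier_mat n m"
  unfolding conj_mat_def by auto

lemma EZ_unit:
  assumes m: "m < p" "m' < p" and A: "A m \<in> carrier_mat D1 D1" and B: "B m' \<in> carrier_mat D2 D2"
  shows "E_Z D1 D2 p A B (unit_mat p m m') = kron (conj_mat (A m)) (B m')"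
proof (rule eq_matI)
  have K: "kron (conj_mat (A m)) (B m') \<in> carrier_mat (D1*D2) (D1*D2)"
    using A B by (intro kron_carrier conj_mat_carrier)
  show "dim_row (E_Z D1 D2 p A B (unit_mat p m m')) = dim_row (kron (conj_mat (A m)) (B m'))"
    "dim_col (E_Z D1 D2 p A B (unit_mat p m m')) = dim_col (kron (conj_mat (A m)) (B m'))"
    using K unfolding E_Z_def by auto
  fix i j assume "i < dim_row (kron (conj_mat (A m)) (B m'))" "j < dim_col (kron (conj_mat (A m)) (B m'))"
  hence i: "i < D1*D2" and j: "j < D1*D2" using K by auto
  have "E_Z D1 D2 p A B (unit_mat p m m') $$ (i,j) =
     (\<Sum>x<p. \<Sum>y<p. unit_mat p m m' $$ (x,y) * kron (conj_mat (A x)) (B y) $$ (i,j))"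
    unfolding E_Z_def using i j by simp
  also have "\<dots> = (\<Sum>x<p. \<Sum>y<p. if x = m then (if y = m' then kron (conj_mat (A x)) (B y) $$ (i,j) else 0) else 0)"
    by (intro sum.cong refl) (simp add: unit_mat_def)
  also have "\<dots> = (\<Sum>x<p. if x = m then (\<Sum>y<p. if y = m' then kron (conj_mat (A x)) (B y) $$ (i,j) else 0) else 0)"
  proof (intro sum.cong refl)
    fix x show "(\<Sum>y<p. if x = m then (if y = m' then kron (conj_mat (A x)) (B y) $$ (i,j) else 0) else 0) =
      (if x = m then (\<Sum>y<p. if y = m' then kron (conj_mat (A x)) (B y) $$ (i,j) else 0) else 0)"
      by (cases "x = m") simp_all
  qed
  also have "\<dots> = kron (conj_mat (A m)) (B m') $$ (i,j)"
    using m by (simp only: sum.delta finite_lessThan lessThan_iff if_True)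
  finally show "E_Z D1 D2 p A B (unit_mat p m m') $$ (i,j) = kron (conj_mat (A m)) (B m') $$ (i,j)" .
qed

definition Pd :: "(nat \<Rightarrow> complex mat) \<Rightarrow> nat \<Rightarrow> nat \<Rightarrow> nat \<Rightarrow> nat \<Rightarrow> complex mat" where
  "Pd g n p d a = foldr (\<lambda>k M. g (digit p d k a) * M) [0..<d] (1\<^sub>m n)"

lemma digit_lt: "0 < p \<Longrightarrow> digit p d k a < p"
  unfolding digit_def by simp

lemma Pd_carrier: "0 < p \<Longrightarrow> (\<And>m. m < p \<Longrightarrow> g m \<in> carrier_mat n n) \<Longrightarrow> Pd g n p d a \<in> carrier_mat n n"
  unfolding Pd_def by (intro foldr_carrier) (auto simp: digit_lt)

lemma Elist_unit:
  assumes p: "0 < p" and hA: "\<And>m. m < p \<Longrightarrow> A m \<in> carrier_mat D1 D1"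
    and hB: "\<And>m. m < p \<Longrightarrow> B m \<in> carrier_mat D2 D2"
  shows "E_list D1 D2 p A B (map (\<lambda>k. unit_mat p (digit p d k a) (digit p d k b)) [0..<d])
     = kron (Pd (\<lambda>m. conj_mat (A m)) D1 p d a) (Pd B D2 p d b)"
proof -
  have "E_list D1 D2 p A B (map (\<lambda>k. unit_mat p (digit p d k a) (digit p d k b)) [0..<d])
     = foldr (\<lambda>k M. kron (conj_mat (A (digit p d k a))) (B (digit p d k b)) * M) [0..<d] (1\<^sub>m (D1*D2))"
    unfolding E_list_def foldr_map
    by (intro foldr_cong refl) (simp add: EZ_unit digit_lt p hA hB)
  also have "\<dots> = kron (Pd (\<lambda>m. conj_mat (A m)) D1 p d a) (Pd B D2 p d b)"
    unfolding Pd_def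
    by (rule foldr_kron) (auto simp: digit_lt p hA hB conj_mat_carrier)
  finally show ?thesis .
qed

lemma EF_form:
  assumes d: "d \<ge> 1" and hA: "\<And>m. m < p \<Longrightarrow> A m \<in> carrier_mat D1 D1"
    and hB: "\<And>m. m < p \<Longrightarrow> B m \<in> carrier_mat D2 D2"
  shows "E_F D1 D2 p d A B F = mat (D1*D2) (D1*D2) (\<lambda>(i,j). \<Sum>a<p^d. \<Sum>b<p^d. F$$(a,b) *
     kron (Pd (\<lambda>m. conj_mat (A m)) D1 p d a) (Pd B D2 p d b) $$ (i,j))"
proof -
  have p: "0 < p" if "a < p^d" for a
    using that d by (cases "p = 0") (auto simp: power_0_left)
  show ?thesis
    unfolding E_F_def
    by (intro cong_mat refl sum.cong) (auto simp: Elist_unit[OF p hA hB])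
qed

lemma foldr_app: fixes X :: "complex mat" shows
  "(\<forall>k\<in>set ks. h k \<in> carrier_mat n n) \<Longrightarrow> X \<in> carrier_mat n m \<Longrightarrow>
   foldr (\<lambda>k M. h k * M) ks X = foldr (\<lambda>k M. h k * M) ks (1\<^sub>m n) * X"
proof (induction ks)
  case Nil
  then show ?case using left_mult_one_mat[of X n m] by simp
next
  case (Cons k ks)
  have c: "foldr (\<lambda>k M. h k * M) ks (1\<^sub>m n) \<in> carrier_mat n n"
    using Cons.prems by (intro foldr_carrier) auto
  have hk: "h k \<in> carrier_mat n n" using Cons.prems by auto
  have IH: "foldr (\<lambda>k M. h k * M) ks X = foldr (\<lambda>k M. h k * M) ks (1\<^sub>m n) * X"
    using Cons.IH Cons.prems by auto
  show ?case using IH by (simp add: assoc_mult_mat[OF hk c Cons.prems(2)])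
qed

lemma digit_Suc_low: "0 < p \<Longrightarrow> r < p \<Longrightarrow> k < d \<Longrightarrow> digit p (Suc d) k (q*p+r) = digit p d k q"
proof -
  assume p: "0 < p" and r: "r < p" and k: "k < d"
  have e: "Suc d - 1 - k = Suc (d - 1 - k)" using k by simp
  have "(q*p+r) div p ^ Suc (d - 1 - k) = ((q*p+r) div p) div p ^ (d - 1 - k)"
    by (simp add: div_mult2_eq)
  also have "(q*p+r) div p = q" using p r by simp
  finally show ?thesis unfolding digit_def e by simp
qed

lemma digit_Suc_top: "0 < p \<Longrightarrow> r < p \<Longrightarrow> digit p (Suc d) d (q*p+r) = r"
  unfolding digit_def by simp

lemma Pd_Suc:
  assumes p: "0 < p" and r: "r < p" and g: "\<And>m. m < p \<Longrightarrow> g m \<in> carrier_mat n n"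
  shows "Pd g n p (Suc d) (q*p+r) = Pd g n p d q * g r"
proof -
  have "Pd g n p (Suc d) (q*p+r) = foldr (\<lambda>k M. g (digit p (Suc d) k (q*p+r)) * M) [0..<d] (g r * 1\<^sub>m n)"
    unfolding Pd_def using p r by (simp add: digit_Suc_top)
  also have "\<dots> = foldr (\<lambda>k M. g (digit p d k q) * M) [0..<d] (g r * 1\<^sub>m n)"
    by (intro foldr_cong refl) (simp add: digit_Suc_low p r)
  also have "\<dots> = Pd g n p d q * (g r * 1\<^sub>m n)"
    unfolding Pd_def
  proof (rule foldr_app[where m=n])
    show "g r * 1\<^sub>m n \<in> carrier_mat n n" using g[OF r] by simp
  qed (use g p digit_lt in auto)
  also have "\<dots> = Pd g n p d q * g r" using g[OF r] by simp
  finally show ?thesis .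
qed

lemma transfer_carrier: "transfer D p A \<in> carrier_mat (D*D) (D*D)"
  unfolding transfer_def by simp

lemma transfer_pow:
  assumes hA: "\<And>m. m < p \<Longrightarrow> A m \<in> carrier_mat D D"
  shows "transfer D p A ^\<^sub>m d = mat (D*D) (D*D) (\<lambda>(i,j). \<Sum>a<p^d.
      kron (Pd (\<lambda>m. conj_mat (A m)) D p d a) (Pd A D p d a) $$ (i,j))"
proof (induction d)
  case 0
  show ?case
  proof (rule eq_matI)
    fix i j assume "i < dim_row (mat (D*D) (D*D) (\<lambda>(i,j). \<Sum>a<p^0.
      kron (Pd (\<lambda>m. conj_mat (A m)) D p 0 a) (Pd A D p 0 a) $$ (i,j)))"
      "j < dim_col (mat (D*D) (D*D) (\<lambda>(i,j). \<Sum>a<p^0.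
      kron (Pd (\<lambda>m. conj_mat (A m)) D p 0 a) (Pd A D p 0 a) $$ (i,j)))"
    hence i: "i < D*D" and j: "j < D*D" by auto
    have "kron (1\<^sub>m D) (1\<^sub>m D) $$ (i,j) = 1\<^sub>m (D*D) $$ (i,j)" by (simp add: kron_one)
    thus "(transfer D p A ^\<^sub>m 0) $$ (i,j) = mat (D*D) (D*D) (\<lambda>(i,j). \<Sum>a<p^0.
      kron (Pd (\<lambda>m. conj_mat (A m)) D p 0 a) (Pd A D p 0 a) $$ (i,j)) $$ (i,j)"
      using i j transfer_carrier[of D p A] by (simp add: Pd_def)
  qed (use transfer_carrier[of D p A] in auto)
next
  case (Suc d)
  define K1 where "K1 a = kron (Pd (\<lambda>m. conj_mat (A m)) D p d a) (Pd A D p d a)" for a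
  define K2 where "K2 r = kron (conj_mat (A r)) (A r)" for r
  have T: "transfer D p A $$ (k,j) = (\<Sum>r<p. K2 r $$ (k,j))" if "k < D*D" "j < D*D" for k j
    unfolding transfer_def K2_def using that by simp
  show ?case
  proof (rule eq_matI)
    show "dim_row (transfer D p A ^\<^sub>m Suc d) = dim_row (mat (D*D) (D*D) (\<lambda>(i,j). \<Sum>a<p^Suc d.
      kron (Pd (\<lambda>m. conj_mat (A m)) D p (Suc d) a) (Pd A D p (Suc d) a) $$ (i,j)))"
      "dim_col (transfer D p A ^\<^sub>m Suc d) = dim_col (mat (D*D) (D*D) (\<lambda>(i,j). \<Sum>a<p^Suc d.
      kron (Pd (\<lambda>m. conj_mat (A m)) D p (Suc d) a) (Pd A D p (Suc d) a) $$ (i,j)))"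
      using transfer_carrier[of D p A] by auto
    fix i j assume "i < dim_row (mat (D*D) (D*D) (\<lambda>(i,j). \<Sum>a<p^Suc d.
      kron (Pd (\<lambda>m. conj_mat (A m)) D p (Suc d) a) (Pd A D p (Suc d) a) $$ (i,j)))"
      "j < dim_col (mat (D*D) (D*D) (\<lambda>(i,j). \<Sum>a<p^Suc d.
      kron (Pd (\<lambda>m. conj_mat (A m)) D p (Suc d) a) (Pd A D p (Suc d) a) $$ (i,j)))"
    hence i: "i < D*D" and j: "j < D*D" by auto
    have pp: "0 < p" if "r < p" for r using that by simp
    have cK1: "Pd (\<lambda>m. conj_mat (A m)) D p d q \<in> carrier_mat D D" "Pd A D p d q \<in> carrier_mat D D" if "r < p" for q r
      using pp[OF that] hA by (auto intro!: Pd_carrier conj_mat_carrier)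
    have cA: "conj_mat (A r) \<in> carrier_mat D D" "A r \<in> carrier_mat D D" if "r < p" for r
      using that hA by (auto intro!: conj_mat_carrier)
    have M1: "transfer D p A ^\<^sub>m d \<in> carrier_mat (D*D) (D*D)" using Suc.IH by simp
    have "(transfer D p A ^\<^sub>m Suc d) $$ (i,j) = (transfer D p A ^\<^sub>m d * transfer D p A) $$ (i,j)" by simp
    also have "\<dots> = (\<Sum>k<D*D. (transfer D p A ^\<^sub>m d) $$ (i,k) * transfer D p A $$ (k,j))"
      by (rule mult_mat_sum[OF M1 transfer_carrier i j])
    also have "\<dots> = (\<Sum>k<D*D. (\<Sum>q<p^d. K1 q $$ (i,k)) * (\<Sum>r<p. K2 r $$ (k,j)))"
      by (intro sum.cong refl) (use i j in \<open>simp add: Suc.IH T K1_def del: pow_mat.simps\<close>)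
    also have "\<dots> = (\<Sum>k<D*D. \<Sum>q<p^d. \<Sum>r<p. K1 q $$ (i,k) * K2 r $$ (k,j))"
      by (simp only: sum_product)
    also have "\<dots> = (\<Sum>q<p^d. \<Sum>r<p. \<Sum>k<D*D. K1 q $$ (i,k) * K2 r $$ (k,j))"
      by (rule swap3)
    also have "\<dots> = (\<Sum>q<p^d. \<Sum>r<p. (K1 q * K2 r) $$ (i,j))"
    proof (intro sum.cong refl)
      fix q r assume "r \<in> {..<p}"
      hence r: "r < p" by simp
      have c1: "K1 q \<in> carrier_mat (D*D) (D*D)" unfolding K1_def using cK1[OF r] by (intro kron_carrier)
      have c2: "K2 r \<in> carrier_mat (D*D) (D*D)" unfolding K2_def using cA[OF r] by (intro kron_carrier)
      show "(\<Sum>k<D*D. K1 q $$ (i,k) * K2 r $$ (k,j)) = (K1 q * K2 r) $$ (i,j)"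
        by (rule mult_mat_sum[OF c1 c2 i j, symmetric])
    qed
    also have "\<dots> = (\<Sum>q<p^d. \<Sum>r<p. kron (Pd (\<lambda>m. conj_mat (A m)) D p (Suc d) (q*p+r)) (Pd A D p (Suc d) (q*p+r)) $$ (i,j))"
    proof (intro sum.cong refl)
      fix q r assume "r \<in> {..<p}"
      hence r: "r < p" by simp
      have "K1 q * K2 r = kron (Pd (\<lambda>m. conj_mat (A m)) D p d q * conj_mat (A r)) (Pd A D p d q * A r)"
        unfolding K1_def K2_def by (rule kron_mult[OF cK1(1)[OF r] cA(1)[OF r] cK1(2)[OF r] cA(2)[OF r]])
      also have "\<dots> = kron (Pd (\<lambda>m. conj_mat (A m)) D p (Suc d) (q*p+r)) (Pd A D p (Suc d) (q*p+r))"
        using r hA by (simp add: Pd_Suc conj_mat_carrier)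
      finally show "(K1 q * K2 r) $$ (i,j) = kron (Pd (\<lambda>m. conj_mat (A m)) D p (Suc d) (q*p+r)) (Pd A D p (Suc d) (q*p+r)) $$ (i,j)"
        by simp
    qed
    also have "\<dots> = (\<Sum>a<p^d*p. kron (Pd (\<lambda>m. conj_mat (A m)) D p (Suc d) a) (Pd A D p (Suc d) a) $$ (i,j))"
      by (rule sum_split[symmetric])
    also have "\<dots> = mat (D*D) (D*D) (\<lambda>(i,j). \<Sum>a<p^Suc d.
      kron (Pd (\<lambda>m. conj_mat (A m)) D p (Suc d) a) (Pd A D p (Suc d) a) $$ (i,j)) $$ (i,j)"
      using i j by (simp add: mult.commute)
    finally show "(transfer D p A ^\<^sub>m Suc d) $$ (i,j) = mat (D*D) (D*D) (\<lambda>(i,j). \<Sum>a<p^Suc d.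
      kron (Pd (\<lambda>m. conj_mat (A m)) D p (Suc d) a) (Pd A D p (Suc d) a) $$ (i,j)) $$ (i,j)" .
  qed
qed



lemma kron_vec_index: "x \<in> carrier_vec n1 \<Longrightarrow> y \<in> carrier_vec n2 \<Longrightarrow> j < n1*n2 \<Longrightarrow>
   kron_vec x y $ j = x $ (j div n2) * y $ (j mod n2)"
  unfolding kron_vec_def by auto

lemma kron_vec_carrier: "x \<in> carrier_vec n1 \<Longrightarrow> y \<in> carrier_vec n2 \<Longrightarrow> kron_vec x y \<in> carrier_vec (n1*n2)"
  unfolding kron_vec_def by auto

lemma KS_mult:
  assumes S: "finite S" and X: "\<And>s. s \<in> S \<Longrightarrow> X s \<in> carrier_mat n1 n1"
    and Y: "\<And>s. s \<in> S \<Longrightarrow> Y s \<in> carrier_mat n2 n2"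
    and x: "x \<in> carrier_vec n1" and y: "y \<in> carrier_vec n2"
  shows "mat (n1*n2) (n1*n2) (\<lambda>(i,j). \<Sum>s\<in>S. c s * kron (X s) (Y s) $$ (i,j)) *\<^sub>v kron_vec x y
    = vec (n1*n2) (\<lambda>i. \<Sum>s\<in>S. c s * ((X s *\<^sub>v x) $ (i div n2) * (Y s *\<^sub>v y) $ (i mod n2)))"
proof (rule eq_vecI)
  fix i assume "i < dim_vec (vec (n1*n2) (\<lambda>i. \<Sum>s\<in>S. c s * ((X s *\<^sub>v x) $ (i div n2) * (Y s *\<^sub>v y) $ (i mod n2))))"
  hence i: "i < n1*n2" by simp
  note ib = divmod_bounds[OF i]
  have M: "mat (n1*n2) (n1*n2) (\<lambda>(i,j). \<Sum>s\<in>S. c s * kron (X s) (Y s) $$ (i,j)) \<in> carrier_mat (n1*n2) (n1*n2)" by simp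
  have "(mat (n1*n2) (n1*n2) (\<lambda>(i,j). \<Sum>s\<in>S. c s * kron (X s) (Y s) $$ (i,j)) *\<^sub>v kron_vec x y) $ i
    = (\<Sum>j<n1*n2. (\<Sum>s\<in>S. c s * kron (X s) (Y s) $$ (i,j)) * (x $ (j div n2) * y $ (j mod n2)))"
    using mult_vec_sum[OF M kron_vec_carrier[OF x y] i] i by (simp add: kron_vec_index[OF x y])
  also have "\<dots> = (\<Sum>j<n1*n2. \<Sum>s\<in>S. c s * ((X s $$ (i div n2, j div n2) * x $ (j div n2)) * (Y s $$ (i mod n2, j mod n2) * y $ (j mod n2))))"
  proof (intro sum.cong refl)
    fix j assume "j \<in> {..<n1*n2}" hence j: "j < n1*n2" by simp
    have "(\<Sum>s\<in>S. c s * kron (X s) (Y s) $$ (i,j)) * (x $ (j div n2) * y $ (j mod n2))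
       = (\<Sum>s\<in>S. c s * kron (X s) (Y s) $$ (i,j) * (x $ (j div n2) * y $ (j mod n2)))"
      by (simp add: sum_distrib_right)
    also have "\<dots> = (\<Sum>s\<in>S. c s * ((X s $$ (i div n2, j div n2) * x $ (j div n2)) * (Y s $$ (i mod n2, j mod n2) * y $ (j mod n2))))"
    proof (intro sum.cong refl)
      fix s assume s: "s \<in> S"
      show "c s * kron (X s) (Y s) $$ (i,j) * (x $ (j div n2) * y $ (j mod n2)) =
        c s * ((X s $$ (i div n2, j div n2) * x $ (j div n2)) * (Y s $$ (i mod n2, j mod n2) * y $ (j mod n2)))"
        by (simp add: kron_index[OF X[OF s] Y[OF s] i j] mult_ac)
    qed
    finally show "(\<Sum>s\<in>S. c s * kron (X s) (Y s) $$ (i,j)) * (x $ (j div n2) * y $ (j mod n2))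
       = (\<Sum>s\<in>S. c s * ((X s $$ (i div n2, j div n2) * x $ (j div n2)) * (Y s $$ (i mod n2, j mod n2) * y $ (j mod n2))))" .
  qed
  also have "\<dots> = (\<Sum>s\<in>S. \<Sum>j<n1*n2. c s * ((X s $$ (i div n2, j div n2) * x $ (j div n2)) * (Y s $$ (i mod n2, j mod n2) * y $ (j mod n2))))"
    by (rule sum.swap)
  also have "\<dots> = (\<Sum>s\<in>S. c s * ((X s *\<^sub>v x) $ (i div n2) * (Y s *\<^sub>v y) $ (i mod n2)))"
  proof (intro sum.cong refl)
    fix s assume s: "s \<in> S"
    have "(\<Sum>j<n1*n2. c s * ((X s $$ (i div n2, j div n2) * x $ (j div n2)) * (Y s $$ (i mod n2, j mod n2) * y $ (j mod n2))))
      = (\<Sum>a<n1. \<Sum>b<n2. c s * ((X s $$ (i div n2, a) * x $ a) * (Y s $$ (i mod n2, b) * y $ b)))"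
      by (rule sum_divmod[where h="\<lambda>a b. c s * ((X s $$ (i div n2, a) * x $ a) * (Y s $$ (i mod n2, b) * y $ b))"])
    also have "\<dots> = c s * (\<Sum>a<n1. \<Sum>b<n2. (X s $$ (i div n2, a) * x $ a) * (Y s $$ (i mod n2, b) * y $ b))"
      by (simp add: sum_distrib_left)
    also have "\<dots> = c s * ((\<Sum>a<n1. X s $$ (i div n2, a) * x $ a) * (\<Sum>b<n2. Y s $$ (i mod n2, b) * y $ b))"
      by (simp only: sum_product)
    also have "\<dots> = c s * ((X s *\<^sub>v x) $ (i div n2) * (Y s *\<^sub>v y) $ (i mod n2))"
      using ib by (simp add: mult_vec_sum[OF X[OF s] x] mult_vec_sum[OF Y[OF s] y])
    finally show "(\<Sum>j<n1*n2. c s * ((X s $$ (i div n2, j div n2) * x $ (j div n2)) * (Y s $$ (i mod n2, j mod n2) * y $ (j mod n2))))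
      = c s * ((X s *\<^sub>v x) $ (i div n2) * (Y s *\<^sub>v y) $ (i mod n2))" .
  qed
  also have "\<dots> = vec (n1*n2) (\<lambda>i. \<Sum>s\<in>S. c s * ((X s *\<^sub>v x) $ (i div n2) * (Y s *\<^sub>v y) $ (i mod n2))) $ i"
    using i by simp
  finally show "(mat (n1*n2) (n1*n2) (\<lambda>(i,j). \<Sum>s\<in>S. c s * kron (X s) (Y s) $$ (i,j)) *\<^sub>v kron_vec x y) $ i
    = vec (n1*n2) (\<lambda>i. \<Sum>s\<in>S. c s * ((X s *\<^sub>v x) $ (i div n2) * (Y s *\<^sub>v y) $ (i mod n2))) $ i" .
qed simp

lemma KS_adj:
  assumes X: "\<And>s. s \<in> S \<Longrightarrow> X s \<in> carrier_mat n1 n1"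
    and Y: "\<And>s. s \<in> S \<Longrightarrow> Y s \<in> carrier_mat n2 n2"
  shows "mat_adjoint (mat (n1*n2) (n1*n2) (\<lambda>(i,j). \<Sum>s\<in>S. c s * kron (X s) (Y s) $$ (i,j)))
    = mat (n1*n2) (n1*n2) (\<lambda>(i,j). \<Sum>s\<in>S. cnj (c s) * kron (mat_adjoint (X s)) (mat_adjoint (Y s)) $$ (i,j))"
proof -
  have aX: "mat_adjoint (X s) \<in> carrier_mat n1 n1" if "s \<in> S" for s using adj_index[OF X[OF that]] by simp
  have aY: "mat_adjoint (Y s) \<in> carrier_mat n2 n2" if "s \<in> S" for s using adj_index[OF Y[OF that]] by simp
  show ?thesis
  proof (rule eq_matI)
    fix i j assume "i < dim_row (mat (n1*n2) (n1*n2) (\<lambda>(i,j). \<Sum>s\<in>S. cnj (c s) * kron (mat_adjoint (X s)) (mat_adjoint (Y s)) $$ (i,j)))"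
      "j < dim_col (mat (n1*n2) (n1*n2) (\<lambda>(i,j). \<Sum>s\<in>S. cnj (c s) * kron (mat_adjoint (X s)) (mat_adjoint (Y s)) $$ (i,j)))"
    hence i: "i < n1*n2" and j: "j < n1*n2" by auto
    note ib = divmod_bounds[OF i] and jb = divmod_bounds[OF j]
    show "mat_adjoint (mat (n1*n2) (n1*n2) (\<lambda>(i,j). \<Sum>s\<in>S. c s * kron (X s) (Y s) $$ (i,j))) $$ (i,j)
      = mat (n1*n2) (n1*n2) (\<lambda>(i,j). \<Sum>s\<in>S. cnj (c s) * kron (mat_adjoint (X s)) (mat_adjoint (Y s)) $$ (i,j)) $$ (i,j)"
    proof -
      have e: "cnj (kron (X s) (Y s) $$ (j,i)) = kron (mat_adjoint (X s)) (mat_adjoint (Y s)) $$ (i,j)" if s: "s \<in> S" for s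
        by (simp only: kron_index[OF aX[OF s] aY[OF s] i j] kron_index[OF X[OF s] Y[OF s] j i])
          (simp add: adj_index[OF X[OF s]] adj_index[OF Y[OF s]] ib jb)
      have M: "mat (n1*n2) (n1*n2) (\<lambda>(i,j). \<Sum>s\<in>S. c s * kron (X s) (Y s) $$ (i,j)) \<in> carrier_mat (n1*n2) (n1*n2)" by simp
      show ?thesis
        using i j by (simp add: adj_index[OF M] e cong: sum.cong)
    qed
  qed (auto simp: adj_index[of _ "n1*n2" "n1*n2"])
qed

lemma conj_mat_index: "X \<in> carrier_mat n m \<Longrightarrow> i < n \<Longrightarrow> j < m \<Longrightarrow> conj_mat X $$ (i,j) = cnj (X $$ (i,j))"
  unfolding conj_mat_def by auto

lemma conj_mat_mult:
  assumes X: "X \<in> carrier_mat n m" and Y: "Y \<in> carrier_mat m l"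
  shows "conj_mat (X*Y) = conj_mat X * conj_mat Y"
proof (rule eq_matI)
  have cX: "conj_mat X \<in> carrier_mat n m" and cY: "conj_mat Y \<in> carrier_mat m l"
    using X Y by (auto intro: conj_mat_carrier)
  fix i j assume "i < dim_row (conj_mat X * conj_mat Y)" "j < dim_col (conj_mat X * conj_mat Y)"
  hence i: "i < n" and j: "j < l" using cX cY by auto
  show "conj_mat (X*Y) $$ (i,j) = (conj_mat X * conj_mat Y) $$ (i,j)"
    using i j X Y cX cY
    by (simp add: conj_mat_index[of _ n l] mult_mat_sum[OF X Y i j] mult_mat_sum[OF cX cY i j]
         conj_mat_index[OF X i] conj_mat_index[OF Y _ j])
qed (use X Y in \<open>auto simp: conj_mat_def\<close>)

lemma conj_mat_one: "conj_mat (1\<^sub>m n) = 1\<^sub>m n"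
  unfolding conj_mat_def by (intro eq_matI) auto

lemma conj_conj: "conj_mat (conj_mat X) = X"
  unfolding conj_mat_def by (intro eq_matI) auto

lemma conj_foldr: "(\<forall>k\<in>set ks. g k \<in> carrier_mat n n) \<Longrightarrow>
  conj_mat (foldr (\<lambda>k M. g k * M) ks (1\<^sub>m n)) = foldr (\<lambda>k M. conj_mat (g k) * M) ks (1\<^sub>m n)"
proof (induction ks)
  case Nil
  then show ?case by (simp add: conj_mat_one)
next
  case (Cons k ks)
  have c: "foldr (\<lambda>k M. g k * M) ks (1\<^sub>m n) \<in> carrier_mat n n"
    using Cons.prems by (intro foldr_carrier) auto
  have gk: "g k \<in> carrier_mat n n" using Cons.prems by auto
  have IH: "conj_mat (foldr (\<lambda>k M. g k * M) ks (1\<^sub>m n)) = foldr (\<lambda>k M. conj_mat (g k) * M) ks (1\<^sub>m n)"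
    using Cons.IH Cons.prems by auto
  show ?case using IH by (simp add: conj_mat_mult[OF gk c])
qed

lemma conj_Pd: "0 < p \<Longrightarrow> (\<And>m. m < p \<Longrightarrow> A m \<in> carrier_mat n n) \<Longrightarrow>
  conj_mat (Pd (\<lambda>m. conj_mat (A m)) n p d a) = Pd A n p d a"
  unfolding Pd_def
  by (subst conj_foldr) (auto simp: conj_conj digit_lt intro!: conj_mat_carrier)

lemma Pd_conj: "0 < p \<Longrightarrow> (\<And>m. m < p \<Longrightarrow> A m \<in> carrier_mat n n) \<Longrightarrow>
  Pd (\<lambda>m. conj_mat (A m)) n p d a = conj_mat (Pd A n p d a)"
  by (metis conj_Pd conj_conj)

lemma cv1: "X \<in> carrier_mat n n \<Longrightarrow> v \<in> carrier_vec n \<Longrightarrow> i < n \<Longrightarrow>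
   (conj_mat X *\<^sub>v conjugate v) $ i = cnj ((X *\<^sub>v v) $ i)"
proof -
  assume X: "X \<in> carrier_mat n n" and v: "v \<in> carrier_vec n" and i: "i < n"
  have cX: "conj_mat X \<in> carrier_mat n n" using X by (rule conj_mat_carrier)
  have cv: "conjugate v \<in> carrier_vec n" using v by simp
  have "(conj_mat X *\<^sub>v conjugate v) $ i = (\<Sum>k<n. conj_mat X $$ (i,k) * conjugate v $ k)"
    by (rule mult_vec_sum[OF cX cv i])
  also have "\<dots> = (\<Sum>k<n. cnj (X $$ (i,k) * v $ k))"
    by (intro sum.cong refl) (use v in \<open>simp add: conj_mat_index[OF X i]\<close>)
  also have "\<dots> = cnj ((X *\<^sub>v v) $ i)"
    by (simp add: mult_vec_sum[OF X v i] del: index_mult_mat_vec)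
  finally show ?thesis .
qed

lemma cv2: "X \<in> carrier_mat n n \<Longrightarrow> v \<in> carrier_vec n \<Longrightarrow> i < n \<Longrightarrow>
   (mat_adjoint (conj_mat X) *\<^sub>v conjugate v) $ i = cnj ((mat_adjoint X *\<^sub>v v) $ i)"
proof -
  assume X: "X \<in> carrier_mat n n" and v: "v \<in> carrier_vec n" and i: "i < n"
  have cX: "conj_mat X \<in> carrier_mat n n" using X by (rule conj_mat_carrier)
  have a1: "mat_adjoint (conj_mat X) \<in> carrier_mat n n" using adj_index[OF cX] by simp
  have a2: "mat_adjoint X \<in> carrier_mat n n" using adj_index[OF X] by simp
  have cv: "conjugate v \<in> carrier_vec n" using v by simp
  have "(mat_adjoint (conj_mat X) *\<^sub>v conjugate v) $ i = (\<Sum>k<n. mat_adjoint (conj_mat X) $$ (i,k) * conjugate v $ k)"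
    by (rule mult_vec_sum[OF a1 cv i])
  also have "\<dots> = (\<Sum>k<n. cnj (mat_adjoint X $$ (i,k) * v $ k))"
    by (intro sum.cong refl) (use v i in \<open>simp add: adj_index[OF cX] adj_index[OF X] conj_mat_index[OF X]\<close>)
  also have "\<dots> = cnj ((mat_adjoint X *\<^sub>v v) $ i)"
    by (simp add: mult_vec_sum[OF a2 v i] del: index_mult_mat_vec)
  finally show ?thesis .
qed

lemma vnorm_conj: "vnorm (conjugate v) = vnorm v"
  unfolding vnorm_def by simp

lemma vnorm_kron: "x \<in> carrier_vec n1 \<Longrightarrow> y \<in> carrier_vec n2 \<Longrightarrow> vnorm (kron_vec x y) = vnorm x * vnorm y"
proof -
  assume x: "x \<in> carrier_vec n1" and y: "y \<in> carrier_vec n2"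
  have "vnorm (kron_vec x y) = sqrt (\<Sum>i<n1*n2. (cmod (x $ (i div n2)))\<^sup>2 * (cmod (y $ (i mod n2)))\<^sup>2)"
    using x y unfolding vnorm_def kron_vec_def by (simp add: norm_mult power_mult_distrib)
  also have "\<dots> = sqrt (\<Sum>a<n1. \<Sum>b<n2. (cmod (x $ a))\<^sup>2 * (cmod (y $ b))\<^sup>2)"
    by (simp only: sum_divmod[where h="\<lambda>a b. (cmod (x $ a))\<^sup>2 * (cmod (y $ b))\<^sup>2"])
  also have "\<dots> = sqrt ((\<Sum>a<n1. (cmod (x $ a))\<^sup>2) * (\<Sum>b<n2. (cmod (y $ b))\<^sup>2))"
    by (simp only: sum_product)
  also have "\<dots> = vnorm x * vnorm y"
    using x y unfolding vnorm_def by (simp add: real_sqrt_mult)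
  finally show ?thesis .
qed



lemma Pd_carrier': "a < p^d \<Longrightarrow> (\<And>m. m < p \<Longrightarrow> g m \<in> carrier_mat n n) \<Longrightarrow> Pd g n p d a \<in> carrier_mat n n"
proof (cases "d = 0")
  case True
  then show ?thesis by (simp add: Pd_def)
next
  case False
  assume a: "a < p^d" and g: "\<And>m. m < p \<Longrightarrow> g m \<in> carrier_mat n n"
  have "0 < p" using a False by (cases "p = 0") (auto simp: power_0_left)
  thus ?thesis using g by (rule Pd_carrier)
qed

lemma Pd_conj': "a < p^d \<Longrightarrow> (\<And>m. m < p \<Longrightarrow> A m \<in> carrier_mat n n) \<Longrightarrow>
  Pd (\<lambda>m. conj_mat (A m)) n p d a = conj_mat (Pd A n p d a)"
proof (cases "d = 0")
  case True
  then show ?thesis by (simp add: Pd_def conj_mat_one)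
next
  case False
  assume a: "a < p^d" and g: "\<And>m. m < p \<Longrightarrow> A m \<in> carrier_mat n n"
  have "0 < p" using a False by (cases "p = 0") (auto simp: power_0_left)
  thus ?thesis using g by (rule Pd_conj)
qed

lemma TKS: assumes hA: "\<And>m. m < p \<Longrightarrow> A m \<in> carrier_mat D D"
  shows "transfer D p A ^\<^sub>m d = mat (D*D) (D*D) (\<lambda>(i,j). \<Sum>a\<in>{..<p^d}.
      1 * kron (Pd (\<lambda>m. conj_mat (A m)) D p d a) (Pd A D p d a) $$ (i,j))"
  by (simp add: transfer_pow[OF hA])

lemma T_carrier: "transfer D p A ^\<^sub>m d \<in> carrier_mat (D*D) (D*D)"
  using transfer_carrier[of D p A] by (rule pow_carrier_mat)

lemma T_vec1:
  assumes hA: "\<And>m. m < p \<Longrightarrow> A m \<in> carrier_mat D D" and x: "x \<in> carrier_vec D"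
  shows "transfer D p A ^\<^sub>m d *\<^sub>v kron_vec x (conjugate x) = vec (D*D) (\<lambda>i. \<Sum>a<p^d.
     (Pd (\<lambda>m. conj_mat (A m)) D p d a *\<^sub>v x) $ (i div D) * cnj ((Pd (\<lambda>m. conj_mat (A m)) D p d a *\<^sub>v x) $ (i mod D)))"
proof -
  have c1: "Pd (\<lambda>m. conj_mat (A m)) D p d a \<in> carrier_mat D D" if "a \<in> {..<p^d}" for a
    using that hA by (auto intro!: Pd_carrier' conj_mat_carrier)
  have c2: "Pd A D p d a \<in> carrier_mat D D" if "a \<in> {..<p^d}" for a
    using that hA by (auto intro!: Pd_carrier')
  have "transfer D p A ^\<^sub>m d *\<^sub>v kron_vec x (conjugate x) = vec (D*D) (\<lambda>i. \<Sum>a\<in>{..<p^d}.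
     1 * ((Pd (\<lambda>m. conj_mat (A m)) D p d a *\<^sub>v x) $ (i div D) * (Pd A D p d a *\<^sub>v conjugate x) $ (i mod D)))"
    apply (subst TKS[OF hA])
     apply simp
    apply (rule KS_mult[where c="\<lambda>_. 1" and S="{..<p^d}" and
        X="\<lambda>a. Pd (\<lambda>m. conj_mat (A m)) D p d a" and Y="\<lambda>a. Pd A D p d a"])
    using c1 c2 x by auto
  also have "\<dots> = vec (D*D) (\<lambda>i. \<Sum>a<p^d.
     (Pd (\<lambda>m. conj_mat (A m)) D p d a *\<^sub>v x) $ (i div D) * cnj ((Pd (\<lambda>m. conj_mat (A m)) D p d a *\<^sub>v x) $ (i mod D)))"
  proof (intro eq_vecI)
    fix i assume "i < dim_vec (vec (D*D) (\<lambda>i. \<Sum>a<p^d.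
     (Pd (\<lambda>m. conj_mat (A m)) D p d a *\<^sub>v x) $ (i div D) * cnj ((Pd (\<lambda>m. conj_mat (A m)) D p d a *\<^sub>v x) $ (i mod D))))"
    hence i: "i < D*D" by simp
    have im: "i mod D < D" using divmod_bounds[OF i] by simp
    show "vec (D*D) (\<lambda>i. \<Sum>a\<in>{..<p^d}.
     1 * ((Pd (\<lambda>m. conj_mat (A m)) D p d a *\<^sub>v x) $ (i div D) * (Pd A D p d a *\<^sub>v conjugate x) $ (i mod D))) $ i =
     vec (D*D) (\<lambda>i. \<Sum>a<p^d.
     (Pd (\<lambda>m. conj_mat (A m)) D p d a *\<^sub>v x) $ (i div D) * cnj ((Pd (\<lambda>m. conj_mat (A m)) D p d a *\<^sub>v x) $ (i mod D))) $ i"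
      using i
    proof (simp, intro sum.cong refl)
      fix a assume a: "a \<in> {..<p^d}"
      have "Pd A D p d a = conj_mat (Pd (\<lambda>m. conj_mat (A m)) D p d a)"
        using Pd_conj'[of a p d A D] a hA by (simp add: conj_conj)
      thus "(Pd (\<lambda>m. conj_mat (A m)) D p d a *\<^sub>v x) $ (i div D) * (Pd A D p d a *\<^sub>v conjugate x) $ (i mod D) =
        (Pd (\<lambda>m. conj_mat (A m)) D p d a *\<^sub>v x) $ (i div D) * cnj ((Pd (\<lambda>m. conj_mat (A m)) D p d a *\<^sub>v x) $ (i mod D))"
        using cv1[OF c1[OF a] x im] by simp
    qed
  qed simp
  finally show ?thesis .
qed

lemma T_vec2:
  assumes hA: "\<And>m. m < p \<Longrightarrow> A m \<in> carrier_mat D D" and x: "x \<in> carrier_vec D"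
  shows "transfer D p A ^\<^sub>m d *\<^sub>v kron_vec (conjugate x) x = vec (D*D) (\<lambda>i. \<Sum>a<p^d. cnj ((Pd A D p d a *\<^sub>v x) $ (i div D)) * (Pd A D p d a *\<^sub>v x) $ (i mod D))"
proof -
  have c1: "Pd (\<lambda>m. conj_mat (A m)) D p d a \<in> carrier_mat D D" if "a \<in> {..<p^d}" for a
    using that hA by (auto intro!: Pd_carrier' conj_mat_carrier)
  have c2: "Pd A D p d a \<in> carrier_mat D D" if "a \<in> {..<p^d}" for a
    using that hA by (auto intro!: Pd_carrier')
  have a1: "mat_adjoint (Pd (\<lambda>m. conj_mat (A m)) D p d a) \<in> carrier_mat D D" if "a \<in> {..<p^d}" for a
    using adj_index[OF c1[OF that]] by simp
  have a2: "mat_adjoint (Pd A D p d a) \<in> carrier_mat D D" if "a \<in> {..<p^d}" for a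
    using adj_index[OF c2[OF that]] by simp
  have M: "transfer D p A ^\<^sub>m d = mat (D*D) (D*D) (\<lambda>(i,j). \<Sum>a\<in>{..<p^d}. 1 * kron (Pd (\<lambda>m. conj_mat (A m)) D p d a) (Pd A D p d a) $$ (i,j))"
    by (rule TKS[OF hA])
  have "transfer D p A ^\<^sub>m d *\<^sub>v kron_vec (conjugate x) x = vec (D*D) (\<lambda>i. \<Sum>a\<in>{..<p^d}.
     1 * (((Pd (\<lambda>m. conj_mat (A m)) D p d a) *\<^sub>v conjugate x) $ (i div D) * ((Pd A D p d a) *\<^sub>v x) $ (i mod D)))"
    unfolding M
    by (rule KS_mult[where c="\<lambda>_. 1" and S="{..<p^d}" and
        X="\<lambda>a. Pd (\<lambda>m. conj_mat (A m)) D p d a" and Y="\<lambda>a. Pd A D p d a"]) (use c1 c2 a1 a2 x in auto)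
  also have "\<dots> = vec (D*D) (\<lambda>i. \<Sum>a<p^d. cnj ((Pd A D p d a *\<^sub>v x) $ (i div D)) * (Pd A D p d a *\<^sub>v x) $ (i mod D))"
  proof (intro eq_vecI)
    fix i assume "i < dim_vec (vec (D*D) (\<lambda>i. \<Sum>a<p^d. cnj ((Pd A D p d a *\<^sub>v x) $ (i div D)) * (Pd A D p d a *\<^sub>v x) $ (i mod D)))"
    hence i: "i < D*D" by simp
    have im: "i mod D < D" and idv: "i div D < D" using divmod_bounds[OF i] by simp_all
    have eqs: "1 * (((Pd (\<lambda>m. conj_mat (A m)) D p d a) *\<^sub>v conjugate x) $ (i div D) * ((Pd A D p d a) *\<^sub>v x) $ (i mod D)) = cnj ((Pd A D p d a *\<^sub>v x) $ (i div D)) * (Pd A D p d a *\<^sub>v x) $ (i mod D)"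
      if a: "a \<in> {..<p^d}" for a
    proof -
      have "Pd (\<lambda>m. conj_mat (A m)) D p d a = conj_mat (Pd A D p d a)"
        using Pd_conj'[of a p d A D] a hA by (simp add: conj_conj)
      thus ?thesis using cv1[OF c2[OF a] x idv] by simp
    qed
    show "vec (D*D) (\<lambda>i. \<Sum>a\<in>{..<p^d}.
     1 * (((Pd (\<lambda>m. conj_mat (A m)) D p d a) *\<^sub>v conjugate x) $ (i div D) * ((Pd A D p d a) *\<^sub>v x) $ (i mod D))) $ i =
     vec (D*D) (\<lambda>i. \<Sum>a<p^d. cnj ((Pd A D p d a *\<^sub>v x) $ (i div D)) * (Pd A D p d a *\<^sub>v x) $ (i mod D)) $ i"
      using i by (simp only: index_vec) (rule sum.cong[OF refl eqs])
  qed simp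
  finally show ?thesis .
qed

lemma T_adj1:
  assumes hA: "\<And>m. m < p \<Longrightarrow> A m \<in> carrier_mat D D" and x: "x \<in> carrier_vec D"
  shows "mat_adjoint (transfer D p A ^\<^sub>m d) *\<^sub>v kron_vec x (conjugate x) = vec (D*D) (\<lambda>i. \<Sum>a<p^d. (mat_adjoint (Pd (\<lambda>m. conj_mat (A m)) D p d a) *\<^sub>v x) $ (i div D) * cnj ((mat_adjoint (Pd (\<lambda>m. conj_mat (A m)) D p d a) *\<^sub>v x) $ (i mod D)))"
proof -
  have c1: "Pd (\<lambda>m. conj_mat (A m)) D p d a \<in> carrier_mat D D" if "a \<in> {..<p^d}" for a
    using that hA by (auto intro!: Pd_carrier' conj_mat_carrier)
  have c2: "Pd A D p d a \<in> carrier_mat D D" if "a \<in> {..<p^d}" for a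
    using that hA by (auto intro!: Pd_carrier')
  have a1: "mat_adjoint (Pd (\<lambda>m. conj_mat (A m)) D p d a) \<in> carrier_mat D D" if "a \<in> {..<p^d}" for a
    using adj_index[OF c1[OF that]] by simp
  have a2: "mat_adjoint (Pd A D p d a) \<in> carrier_mat D D" if "a \<in> {..<p^d}" for a
    using adj_index[OF c2[OF that]] by simp
  have M: "mat_adjoint (transfer D p A ^\<^sub>m d) = mat (D*D) (D*D) (\<lambda>(i,j). \<Sum>a\<in>{..<p^d}. cnj 1 * kron (mat_adjoint (Pd (\<lambda>m. conj_mat (A m)) D p d a)) (mat_adjoint (Pd A D p d a)) $$ (i,j))"
    apply (subst TKS[OF hA])
     apply simp
    by (rule KS_adj) (use c1 c2 in auto)
  have "mat_adjoint (transfer D p A ^\<^sub>m d) *\<^sub>v kron_vec x (conjugate x) = vec (D*D) (\<lambda>i. \<Sum>a\<in>{..<p^d}.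
     cnj 1 * (((mat_adjoint (Pd (\<lambda>m. conj_mat (A m)) D p d a)) *\<^sub>v x) $ (i div D) * ((mat_adjoint (Pd A D p d a)) *\<^sub>v conjugate x) $ (i mod D)))"
    unfolding M
    by (rule KS_mult[where c="\<lambda>_. cnj 1" and S="{..<p^d}" and
        X="\<lambda>a. mat_adjoint (Pd (\<lambda>m. conj_mat (A m)) D p d a)" and Y="\<lambda>a. mat_adjoint (Pd A D p d a)"]) (use c1 c2 a1 a2 x in auto)
  also have "\<dots> = vec (D*D) (\<lambda>i. \<Sum>a<p^d. (mat_adjoint (Pd (\<lambda>m. conj_mat (A m)) D p d a) *\<^sub>v x) $ (i div D) * cnj ((mat_adjoint (Pd (\<lambda>m. conj_mat (A m)) D p d a) *\<^sub>v x) $ (i mod D)))"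
  proof (intro eq_vecI)
    fix i assume "i < dim_vec (vec (D*D) (\<lambda>i. \<Sum>a<p^d. (mat_adjoint (Pd (\<lambda>m. conj_mat (A m)) D p d a) *\<^sub>v x) $ (i div D) * cnj ((mat_adjoint (Pd (\<lambda>m. conj_mat (A m)) D p d a) *\<^sub>v x) $ (i mod D))))"
    hence i: "i < D*D" by simp
    have im: "i mod D < D" and idv: "i div D < D" using divmod_bounds[OF i] by simp_all
    have eqs: "cnj 1 * (((mat_adjoint (Pd (\<lambda>m. conj_mat (A m)) D p d a)) *\<^sub>v x) $ (i div D) * ((mat_adjoint (Pd A D p d a)) *\<^sub>v conjugate x) $ (i mod D)) = (mat_adjoint (Pd (\<lambda>m. conj_mat (A m)) D p d a) *\<^sub>v x) $ (i div D) * cnj ((mat_adjoint (Pd (\<lambda>m. conj_mat (A m)) D p d a) *\<^sub>v x) $ (i mod D))"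
      if a: "a \<in> {..<p^d}" for a
    proof -
      have "Pd A D p d a = conj_mat (Pd (\<lambda>m. conj_mat (A m)) D p d a)"
        using Pd_conj'[of a p d A D] a hA by (simp add: conj_conj)
      thus ?thesis using cv2[OF c1[OF a] x im] by simp
    qed
    show "vec (D*D) (\<lambda>i. \<Sum>a\<in>{..<p^d}.
     cnj 1 * (((mat_adjoint (Pd (\<lambda>m. conj_mat (A m)) D p d a)) *\<^sub>v x) $ (i div D) * ((mat_adjoint (Pd A D p d a)) *\<^sub>v conjugate x) $ (i mod D))) $ i =
     vec (D*D) (\<lambda>i. \<Sum>a<p^d. (mat_adjoint (Pd (\<lambda>m. conj_mat (A m)) D p d a) *\<^sub>v x) $ (i div D) * cnj ((mat_adjoint (Pd (\<lambda>m. conj_mat (A m)) D p d a) *\<^sub>v x) $ (i mod D))) $ i"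
      using i by (simp only: index_vec) (rule sum.cong[OF refl eqs])
  qed simp
  finally show ?thesis .
qed

lemma T_adj2:
  assumes hA: "\<And>m. m < p \<Longrightarrow> A m \<in> carrier_mat D D" and x: "x \<in> carrier_vec D"
  shows "mat_adjoint (transfer D p A ^\<^sub>m d) *\<^sub>v kron_vec (conjugate x) x = vec (D*D) (\<lambda>i. \<Sum>a<p^d. cnj ((mat_adjoint (Pd A D p d a) *\<^sub>v x) $ (i div D)) * (mat_adjoint (Pd A D p d a) *\<^sub>v x) $ (i mod D))"
proof -
  have c1: "Pd (\<lambda>m. conj_mat (A m)) D p d a \<in> carrier_mat D D" if "a \<in> {..<p^d}" for a
    using that hA by (auto intro!: Pd_carrier' conj_mat_carrier)
  have c2: "Pd A D p d a \<in> carrier_mat D D" if "a \<in> {..<p^d}" for a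
    using that hA by (auto intro!: Pd_carrier')
  have a1: "mat_adjoint (Pd (\<lambda>m. conj_mat (A m)) D p d a) \<in> carrier_mat D D" if "a \<in> {..<p^d}" for a
    using adj_index[OF c1[OF that]] by simp
  have a2: "mat_adjoint (Pd A D p d a) \<in> carrier_mat D D" if "a \<in> {..<p^d}" for a
    using adj_index[OF c2[OF that]] by simp
  have M: "mat_adjoint (transfer D p A ^\<^sub>m d) = mat (D*D) (D*D) (\<lambda>(i,j). \<Sum>a\<in>{..<p^d}. cnj 1 * kron (mat_adjoint (Pd (\<lambda>m. conj_mat (A m)) D p d a)) (mat_adjoint (Pd A D p d a)) $$ (i,j))"
    apply (subst TKS[OF hA])
     apply simp
    by (rule KS_adj) (use c1 c2 in auto)
  have "mat_adjoint (transfer D p A ^\<^sub>m d) *\<^sub>v kron_vec (conjugate x) x = vec (D*D) (\<lambda>i. \<Sum>a\<in>{..<p^d}.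
     cnj 1 * (((mat_adjoint (Pd (\<lambda>m. conj_mat (A m)) D p d a)) *\<^sub>v conjugate x) $ (i div D) * ((mat_adjoint (Pd A D p d a)) *\<^sub>v x) $ (i mod D)))"
    unfolding M
    by (rule KS_mult[where c="\<lambda>_. cnj 1" and S="{..<p^d}" and
        X="\<lambda>a. mat_adjoint (Pd (\<lambda>m. conj_mat (A m)) D p d a)" and Y="\<lambda>a. mat_adjoint (Pd A D p d a)"]) (use c1 c2 a1 a2 x in auto)
  also have "\<dots> = vec (D*D) (\<lambda>i. \<Sum>a<p^d. cnj ((mat_adjoint (Pd A D p d a) *\<^sub>v x) $ (i div D)) * (mat_adjoint (Pd A D p d a) *\<^sub>v x) $ (i mod D))"
  proof (intro eq_vecI)
    fix i assume "i < dim_vec (vec (D*D) (\<lambda>i. \<Sum>a<p^d. cnj ((mat_adjoint (Pd A D p d a) *\<^sub>v x) $ (i div D)) * (mat_adjoint (Pd A D p d a) *\<^sub>v x) $ (i mod D)))"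
    hence i: "i < D*D" by simp
    have im: "i mod D < D" and idv: "i div D < D" using divmod_bounds[OF i] by simp_all
    have eqs: "cnj 1 * (((mat_adjoint (Pd (\<lambda>m. conj_mat (A m)) D p d a)) *\<^sub>v conjugate x) $ (i div D) * ((mat_adjoint (Pd A D p d a)) *\<^sub>v x) $ (i mod D)) = cnj ((mat_adjoint (Pd A D p d a) *\<^sub>v x) $ (i div D)) * (mat_adjoint (Pd A D p d a) *\<^sub>v x) $ (i mod D)"
      if a: "a \<in> {..<p^d}" for a
    proof -
      have "Pd (\<lambda>m. conj_mat (A m)) D p d a = conj_mat (Pd A D p d a)"
        using Pd_conj'[of a p d A D] a hA by (simp add: conj_conj)
      thus ?thesis using cv2[OF c2[OF a] x idv] by simp
    qed
    show "vec (D*D) (\<lambda>i. \<Sum>a\<in>{..<p^d}.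
     cnj 1 * (((mat_adjoint (Pd (\<lambda>m. conj_mat (A m)) D p d a)) *\<^sub>v conjugate x) $ (i div D) * ((mat_adjoint (Pd A D p d a)) *\<^sub>v x) $ (i mod D))) $ i =
     vec (D*D) (\<lambda>i. \<Sum>a<p^d. cnj ((mat_adjoint (Pd A D p d a) *\<^sub>v x) $ (i div D)) * (mat_adjoint (Pd A D p d a) *\<^sub>v x) $ (i mod D)) $ i"
      using i by (simp only: index_vec) (rule sum.cong[OF refl eqs])
  qed simp
  finally show ?thesis .
qed



lemma vnorm_unit: "k < m \<Longrightarrow> vnorm (unit_vec m k) = 1"
proof -
  assume k: "k < m"
  have "(\<Sum>i<m. (cmod (unit_vec m k $ i))\<^sup>2) = (\<Sum>i<m. if i = k then 1 else 0)"
    by (intro sum.cong refl) (use k in auto)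
  also have "\<dots> = 1" using k by simp
  finally show ?thesis unfolding vnorm_def by simp
qed

lemma unit_kron: "j < n1*n2 \<Longrightarrow> unit_vec (n1*n2) j = kron_vec (unit_vec n1 (j div n2)) (unit_vec n2 (j mod n2))"
proof (rule eq_vecI)
  assume j: "j < n1*n2"
  note jb = divmod_bounds[OF j]
  fix i assume "i < dim_vec (kron_vec (unit_vec n1 (j div n2)) (unit_vec n2 (j mod n2)))"
  hence i: "i < n1*n2" by (simp add: kron_vec_def)
  note ib = divmod_bounds[OF i]
  have "(i div n2 = j div n2 \<and> i mod n2 = j mod n2) = (i = j)"
    by (metis div_mult_mod_eq)
  thus "unit_vec (n1*n2) j $ i = kron_vec (unit_vec n1 (j div n2)) (unit_vec n2 (j mod n2)) $ i"
    using i j ib jb by (auto simp: kron_vec_def)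
qed (simp add: kron_vec_def)

lemma vec_claim:
  fixes D1 D2 p d :: nat
    and A B :: "nat \<Rightarrow> complex mat"
    and \<psi>1 \<psi>2 :: "complex vec"
    and F :: "complex mat"
  assumes hA: "\<And>m. m < p \<Longrightarrow> A m \<in> carrier_mat D1 D1"
    and hB: "\<And>m. m < p \<Longrightarrow> B m \<in> carrier_mat D2 D2"
    and h\<psi>1: "\<psi>1 \<in> carrier_vec D1" "vnorm \<psi>1 = 1"
    and h\<psi>2: "\<psi>2 \<in> carrier_vec D2" "vnorm \<psi>2 = 1"
    and hd: "d \<ge> 1"
    and hF: "F \<in> carrier_mat (p ^ d) (p ^ d)"
  shows "vnorm (E_F D1 D2 p d A B F *\<^sub>v kron_vec \<psi>1 \<psi>2)
           \<le> opnorm F * sqrt (opnorm (transfer D1 p A ^\<^sub>m d) * opnorm (transfer D2 p B ^\<^sub>m d))"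
proof -
  define N where "N = p^d"
  define PA where "PA a = Pd (\<lambda>m. conj_mat (A m)) D1 p d a" for a
  define PB where "PB b = Pd B D2 p d b" for b
  define S where "S = {..<N} \<times> {..<N}"
  have cA: "PA (fst s) \<in> carrier_mat D1 D1" if "s \<in> S" for s
    using that hA unfolding S_def PA_def N_def by (auto intro!: Pd_carrier' conj_mat_carrier)
  have cB: "PB (snd s) \<in> carrier_mat D2 D2" if "s \<in> S" for s
    using that hB unfolding S_def PB_def N_def by (auto intro!: Pd_carrier')
  have EF: "E_F D1 D2 p d A B F = mat (D1*D2) (D1*D2) (\<lambda>(i,j). \<Sum>s\<in>S. F $$ (fst s, snd s) * kron (PA (fst s)) (PB (snd s)) $$ (i,j))"
  proof -
    have "E_F D1 D2 p d A B F = mat (D1*D2) (D1*D2) (\<lambda>(i,j). \<Sum>a<p^d. \<Sum>b<p^d. F$$(a,b) *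
     kron (Pd (\<lambda>m. conj_mat (A m)) D1 p d a) (Pd B D2 p d b) $$ (i,j))"
      using EF_form[OF hd hA hB] by simp
    thus ?thesis unfolding S_def PA_def PB_def N_def by (simp only: dbl)
  qed
  define u where "u a k = (PA a *\<^sub>v \<psi>1) $ k" for a k
  define w where "w b k = (PB b *\<^sub>v \<psi>2) $ k" for b k
  have "E_F D1 D2 p d A B F *\<^sub>v kron_vec \<psi>1 \<psi>2 = vec (D1*D2) (\<lambda>i. \<Sum>s\<in>S. F $$ (fst s, snd s) *
     ((PA (fst s) *\<^sub>v \<psi>1) $ (i div D2) * (PB (snd s) *\<^sub>v \<psi>2) $ (i mod D2)))"
    unfolding EF
    by (rule KS_mult[where c="\<lambda>s. F $$ (fst s, snd s)" and S=S and X="\<lambda>s. PA (fst s)" and Y="\<lambda>s. PB (snd s)"])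
      (use cA cB h\<psi>1 h\<psi>2 in \<open>auto simp: S_def\<close>)
  also have "\<dots> = vec (D1*D2) (\<lambda>i. \<Sum>a<N. \<Sum>b<N. F $$ (a,b) * u a (i div D2) * w b (i mod D2))"
    unfolding S_def u_def w_def by (simp add: dbl mult.assoc)
  finally have V: "E_F D1 D2 p d A B F *\<^sub>v kron_vec \<psi>1 \<psi>2 = vec (D1*D2) (\<lambda>i. \<Sum>a<N. \<Sum>b<N. F $$ (a,b) * u a (i div D2) * w b (i mod D2))" .
  have kv1: "kron_vec \<psi>1 (conjugate \<psi>1) \<in> carrier_vec (dim_col (transfer D1 p A ^\<^sub>m d))"
    using T_carrier[of D1 p A d] kron_vec_carrier[OF h\<psi>1(1) carrier_vec_conjugate[OF h\<psi>1(1)]] by (metis carrier_matD(2))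
  have kv2: "kron_vec (conjugate \<psi>2) \<psi>2 \<in> carrier_vec (dim_col (transfer D2 p B ^\<^sub>m d))"
    using T_carrier[of D2 p B d] kron_vec_carrier[OF carrier_vec_conjugate[OF h\<psi>2(1)] h\<psi>2(1)] by (metis carrier_matD(2))
  have n1: "vnorm (kron_vec \<psi>1 (conjugate \<psi>1)) = 1"
    using h\<psi>1 by (simp add: vnorm_kron[OF h\<psi>1(1) carrier_vec_conjugate[OF h\<psi>1(1)]] vnorm_conj)
  have n2: "vnorm (kron_vec (conjugate \<psi>2) \<psi>2) = 1"
    using h\<psi>2 by (simp add: vnorm_kron[OF carrier_vec_conjugate[OF h\<psi>2(1)] h\<psi>2(1)] vnorm_conj)
  have T1: "vnorm (vec (D1*D1) (\<lambda>i. \<Sum>a<N. u a (i div D1) * cnj (u a (i mod D1)))) \<le> opnorm (transfer D1 p A ^\<^sub>m d)"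
  proof -
    have "vec (D1*D1) (\<lambda>i. \<Sum>a<N. u a (i div D1) * cnj (u a (i mod D1))) = transfer D1 p A ^\<^sub>m d *\<^sub>v kron_vec \<psi>1 (conjugate \<psi>1)"
      unfolding u_def PA_def N_def by (rule T_vec1[OF hA h\<psi>1(1), symmetric])
    moreover have "vnorm (transfer D1 p A ^\<^sub>m d *\<^sub>v kron_vec \<psi>1 (conjugate \<psi>1)) \<le> opnorm (transfer D1 p A ^\<^sub>m d)"
      using opnorm_bound[OF kv1] n1 by simp
    ultimately show ?thesis by simp
  qed
  have T2: "vnorm (vec (D2*D2) (\<lambda>i. \<Sum>b<N. cnj (w b (i div D2)) * w b (i mod D2))) \<le> opnorm (transfer D2 p B ^\<^sub>m d)"
  proof -
    have "vec (D2*D2) (\<lambda>i. \<Sum>b<N. cnj (w b (i div D2)) * w b (i mod D2)) = transfer D2 p B ^\<^sub>m d *\<^sub>v kron_vec (conjugate \<psi>2) \<psi>2"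
      unfolding w_def PB_def N_def by (rule T_vec2[OF hB h\<psi>2(1), symmetric])
    moreover have "vnorm (transfer D2 p B ^\<^sub>m d *\<^sub>v kron_vec (conjugate \<psi>2) \<psi>2) \<le> opnorm (transfer D2 p B ^\<^sub>m d)"
      using opnorm_bound[OF kv2] n2 by simp
    ultimately show ?thesis by simp
  qed
  have hF': "F \<in> carrier_mat N N" using hF unfolding N_def .
  show ?thesis unfolding V
    by (rule main_bound[OF opnorm_nonneg _ _ T1 T2]) (use opsum[OF hF'] opsum_cnj[OF hF'] in auto)
qed

lemma adj_claim:
  fixes D1 D2 p d :: nat
    and A B :: "nat \<Rightarrow> complex mat"
    and \<psi>1 \<psi>2 :: "complex vec"
    and F :: "complex mat"
  assumes hA: "\<And>m. m < p \<Longrightarrow> A m \<in> carrier_mat D1 D1"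
    and hB: "\<And>m. m < p \<Longrightarrow> B m \<in> carrier_mat D2 D2"
    and h\<psi>1: "\<psi>1 \<in> carrier_vec D1" "vnorm \<psi>1 = 1"
    and h\<psi>2: "\<psi>2 \<in> carrier_vec D2" "vnorm \<psi>2 = 1"
    and hd: "d \<ge> 1"
    and hF: "F \<in> carrier_mat (p ^ d) (p ^ d)"
  shows "vnorm (mat_adjoint (E_F D1 D2 p d A B F) *\<^sub>v kron_vec \<psi>1 \<psi>2)
           \<le> opnorm F * sqrt (opnorm (transfer D1 p A ^\<^sub>m d) * opnorm (transfer D2 p B ^\<^sub>m d))"
proof -
  define N where "N = p^d"
  define PA where "PA a = Pd (\<lambda>m. conj_mat (A m)) D1 p d a" for a
  define PB where "PB b = Pd B D2 p d b" for b
  define S where "S = {..<N} \<times> {..<N}"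
  have cA: "PA (fst s) \<in> carrier_mat D1 D1" if "s \<in> S" for s
    using that hA unfolding S_def PA_def N_def by (auto intro!: Pd_carrier' conj_mat_carrier)
  have cB: "PB (snd s) \<in> carrier_mat D2 D2" if "s \<in> S" for s
    using that hB unfolding S_def PB_def N_def by (auto intro!: Pd_carrier')
  have EF: "E_F D1 D2 p d A B F = mat (D1*D2) (D1*D2) (\<lambda>(i,j). \<Sum>s\<in>S. F $$ (fst s, snd s) * kron (PA (fst s)) (PB (snd s)) $$ (i,j))"
  proof -
    have "E_F D1 D2 p d A B F = mat (D1*D2) (D1*D2) (\<lambda>(i,j). \<Sum>a<p^d. \<Sum>b<p^d. F$$(a,b) *
     kron (Pd (\<lambda>m. conj_mat (A m)) D1 p d a) (Pd B D2 p d b) $$ (i,j))"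
      using EF_form[OF hd hA hB] by simp
    thus ?thesis unfolding S_def PA_def PB_def N_def by (simp only: dbl)
  qed
  have aA: "mat_adjoint (PA (fst s)) \<in> carrier_mat D1 D1" if "s \<in> S" for s
    using adj_index[OF cA[OF that]] by simp
  have aB: "mat_adjoint (PB (snd s)) \<in> carrier_mat D2 D2" if "s \<in> S" for s
    using adj_index[OF cB[OF that]] by simp
  have EFa: "mat_adjoint (E_F D1 D2 p d A B F) = mat (D1*D2) (D1*D2) (\<lambda>(i,j). \<Sum>s\<in>S. cnj (F $$ (fst s, snd s)) *
      kron (mat_adjoint (PA (fst s))) (mat_adjoint (PB (snd s))) $$ (i,j))"
    unfolding EF by (rule KS_adj) (use cA cB in auto)
  define u where "u a k = (mat_adjoint (PA a) *\<^sub>v \<psi>1) $ k" for a k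
  define w where "w b k = (mat_adjoint (PB b) *\<^sub>v \<psi>2) $ k" for b k
  have "mat_adjoint (E_F D1 D2 p d A B F) *\<^sub>v kron_vec \<psi>1 \<psi>2 = vec (D1*D2) (\<lambda>i. \<Sum>s\<in>S. cnj (F $$ (fst s, snd s)) *
     ((mat_adjoint (PA (fst s)) *\<^sub>v \<psi>1) $ (i div D2) * (mat_adjoint (PB (snd s)) *\<^sub>v \<psi>2) $ (i mod D2)))"
    unfolding EFa
    by (rule KS_mult[where c="\<lambda>s. cnj (F $$ (fst s, snd s))" and S=S and X="\<lambda>s. mat_adjoint (PA (fst s))" and Y="\<lambda>s. mat_adjoint (PB (snd s))"])
      (use aA aB h\<psi>1 h\<psi>2 in \<open>auto simp: S_def\<close>)
  also have "\<dots> = vec (D1*D2) (\<lambda>i. \<Sum>a<N. \<Sum>b<N. cnj (F $$ (a,b)) * u a (i div D2) * w b (i mod D2))"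
    unfolding S_def u_def w_def by (simp add: dbl mult.assoc)
  finally have V: "mat_adjoint (E_F D1 D2 p d A B F) *\<^sub>v kron_vec \<psi>1 \<psi>2 = vec (D1*D2) (\<lambda>i. \<Sum>a<N. \<Sum>b<N. cnj (F $$ (a,b)) * u a (i div D2) * w b (i mod D2))" .
  have kv1: "kron_vec \<psi>1 (conjugate \<psi>1) \<in> carrier_vec (dim_col (transfer D1 p A ^\<^sub>m d))"
    using T_carrier[of D1 p A d] kron_vec_carrier[OF h\<psi>1(1) carrier_vec_conjugate[OF h\<psi>1(1)]] by (metis carrier_matD(2))
  have kv2: "kron_vec (conjugate \<psi>2) \<psi>2 \<in> carrier_vec (dim_col (transfer D2 p B ^\<^sub>m d))"
    using T_carrier[of D2 p B d] kron_vec_carrier[OF carrier_vec_conjugate[OF h\<psi>2(1)] h\<psi>2(1)] by (metis carrier_matD(2))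
  have n1: "vnorm (kron_vec \<psi>1 (conjugate \<psi>1)) = 1"
    using h\<psi>1 by (simp add: vnorm_kron[OF h\<psi>1(1) carrier_vec_conjugate[OF h\<psi>1(1)]] vnorm_conj)
  have n2: "vnorm (kron_vec (conjugate \<psi>2) \<psi>2) = 1"
    using h\<psi>2 by (simp add: vnorm_kron[OF carrier_vec_conjugate[OF h\<psi>2(1)] h\<psi>2(1)] vnorm_conj)
  have T1: "vnorm (vec (D1*D1) (\<lambda>i. \<Sum>a<N. u a (i div D1) * cnj (u a (i mod D1)))) \<le> opnorm (transfer D1 p A ^\<^sub>m d)"
  proof -
    have "vec (D1*D1) (\<lambda>i. \<Sum>a<N. u a (i div D1) * cnj (u a (i mod D1))) = mat_adjoint (transfer D1 p A ^\<^sub>m d) *\<^sub>v kron_vec \<psi>1 (conjugate \<psi>1)"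
      unfolding u_def PA_def N_def by (rule T_adj1[OF hA h\<psi>1(1), symmetric])
    moreover have "vnorm (mat_adjoint (transfer D1 p A ^\<^sub>m d) *\<^sub>v kron_vec \<psi>1 (conjugate \<psi>1)) \<le> opnorm (transfer D1 p A ^\<^sub>m d)"
      using adj_bound[OF T_carrier kron_vec_carrier[OF h\<psi>1(1) carrier_vec_conjugate[OF h\<psi>1(1)]]] n1 by simp
    ultimately show ?thesis by simp
  qed
  have T2: "vnorm (vec (D2*D2) (\<lambda>i. \<Sum>b<N. cnj (w b (i div D2)) * w b (i mod D2))) \<le> opnorm (transfer D2 p B ^\<^sub>m d)"
  proof -
    have "vec (D2*D2) (\<lambda>i. \<Sum>b<N. cnj (w b (i div D2)) * w b (i mod D2)) = mat_adjoint (transfer D2 p B ^\<^sub>m d) *\<^sub>v kron_vec (conjugate \<psi>2) \<psi>2"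
      unfolding w_def PB_def N_def by (rule T_adj2[OF hB h\<psi>2(1), symmetric])
    moreover have "vnorm (mat_adjoint (transfer D2 p B ^\<^sub>m d) *\<^sub>v kron_vec (conjugate \<psi>2) \<psi>2) \<le> opnorm (transfer D2 p B ^\<^sub>m d)"
      using adj_bound[OF T_carrier kron_vec_carrier[OF carrier_vec_conjugate[OF h\<psi>2(1)] h\<psi>2(1)]] n2 by simp
    ultimately show ?thesis by simp
  qed
  have hF': "F \<in> carrier_mat N N" using hF unfolding N_def .
  show ?thesis unfolding V
    by (rule main_bound[OF opnorm_nonneg _ _ T1 T2]) (use opsum[OF hF'] opsum_cnj[OF hF'] in simp_all)
qed

lemma mult_unit: fixes E :: "complex mat" shows "E \<in> carrier_mat n n \<Longrightarrow> i < n \<Longrightarrow> j < n \<Longrightarrow> (E *\<^sub>v unit_vec n j) $ i = E $$ (i,j)"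
proof -
  assume E: "E \<in> carrier_mat n n" and i: "i < n" and j: "j < n"
  have "(E *\<^sub>v unit_vec n j) $ i = (\<Sum>k<n. E $$ (i,k) * unit_vec n j $ k)"
    by (rule mult_vec_sum[OF E unit_vec_carrier i])
  also have "\<dots> = (\<Sum>k<n. if k = j then E $$ (i,k) else 0)"
    by (intro sum.cong refl) (use j in auto)
  also have "\<dots> = E $$ (i,j)" using j by simp
  finally show ?thesis .
qed

lemma frob_claim:
  fixes D1 D2 p d :: nat
    and A B :: "nat \<Rightarrow> complex mat"
    and F :: "complex mat"
  assumes hA: "\<And>m. m < p \<Longrightarrow> A m \<in> carrier_mat D1 D1"
    and hB: "\<And>m. m < p \<Longrightarrow> B m \<in> carrier_mat D2 D2"
    and hd: "d \<ge> 1"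
    and hF: "F \<in> carrier_mat (p ^ d) (p ^ d)"
  shows "frob (E_F D1 D2 p d A B F)
           \<le> real (D1 * D2) * opnorm F * sqrt (opnorm (transfer D1 p A ^\<^sub>m d) * opnorm (transfer D2 p B ^\<^sub>m d))"
proof -
  define E where "E = E_F D1 D2 p d A B F"
  define n where "n = D1 * D2"
  define R where "R = opnorm F * sqrt (opnorm (transfer D1 p A ^\<^sub>m d) * opnorm (transfer D2 p B ^\<^sub>m d))"
  have R0: "R \<ge> 0"
  proof -
    have "opnorm (transfer D1 p A ^\<^sub>m d) \<ge> 0" "opnorm (transfer D2 p B ^\<^sub>m d) \<ge> 0" "opnorm F \<ge> 0"
      by (rule opnorm_nonneg)+
    thus ?thesis unfolding R_def by simp
  qed
  have Ec: "E \<in> carrier_mat n n" unfolding E_def n_def E_F_def by simp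
  have col: "vnorm (E *\<^sub>v unit_vec n j) \<le> R" if j: "j < n" for j
  proof -
    note jb = divmod_bounds[OF j[unfolded n_def]]
    have "unit_vec n j = kron_vec (unit_vec D1 (j div D2)) (unit_vec D2 (j mod D2))"
      unfolding n_def by (rule unit_kron) (use j n_def in simp)
    moreover have "vnorm (E_F D1 D2 p d A B F *\<^sub>v kron_vec (unit_vec D1 (j div D2)) (unit_vec D2 (j mod D2))) \<le> R"
      unfolding R_def
      by (rule vec_claim[OF hA hB _ _ _ _ hd hF]) (use jb vnorm_unit in auto)
    ultimately show ?thesis unfolding E_def by simp
  qed
  have "(frob E)\<^sup>2 = (\<Sum>i<n. \<Sum>j<n. (cmod (E $$ (i,j)))\<^sup>2)"
    using Ec unfolding frob_def by (simp add: sum_nonneg)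
  also have "\<dots> = (\<Sum>j<n. \<Sum>i<n. (cmod (E $$ (i,j)))\<^sup>2)" by (rule sum.swap)
  also have "\<dots> = (\<Sum>j<n. (vnorm (E *\<^sub>v unit_vec n j))\<^sup>2)"
  proof (intro sum.cong refl)
    fix j assume "j \<in> {..<n}" hence j: "j < n" by simp
    have "(vnorm (E *\<^sub>v unit_vec n j))\<^sup>2 = (\<Sum>i<n. (cmod ((E *\<^sub>v unit_vec n j) $ i))\<^sup>2)"
      unfolding vnorm_sq using Ec by simp
    also have "\<dots> = (\<Sum>i<n. (cmod (E $$ (i,j)))\<^sup>2)"
      by (intro sum.cong refl) (simp add: mult_unit[OF Ec _ j])
    finally show "(\<Sum>i<n. (cmod (E $$ (i,j)))\<^sup>2) = (vnorm (E *\<^sub>v unit_vec n j))\<^sup>2" by simp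
  qed
  also have "\<dots> \<le> (\<Sum>j<n. R\<^sup>2)"
    by (intro sum_mono power_mono col vnorm_nonneg) simp
  also have "\<dots> = real n * R\<^sup>2" by simp
  finally have f2: "(frob E)\<^sup>2 \<le> real n * R\<^sup>2" .
  have "frob E = sqrt ((frob E)\<^sup>2)" using frob_nonneg[of E] by simp
  also have "\<dots> \<le> sqrt (real n * R\<^sup>2)" using f2 by (rule real_sqrt_le_mono)
  also have "\<dots> = sqrt (real n) * R" using R0 by (simp add: real_sqrt_mult)
  also have "\<dots> \<le> real n * R"
  proof (rule mult_right_mono[OF _ R0])
    show "sqrt (real n) \<le> real n"
    proof (cases "n = 0")
      case False
      hence n1: "real n \<ge> 1" by simp
      hence "real n \<le> real n * real n" by (simp add: mult_le_cancel_left1)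
      hence "sqrt (real n) \<le> sqrt (real n * real n)" by (rule real_sqrt_le_mono)
      thus ?thesis by (simp add: real_sqrt_mult_self)
    qed simp
  qed
  finally show ?thesis unfolding E_def n_def R_def by (simp add: mult.assoc)
qed


theorem lemma6:
  fixes D1 D2 p d :: nat
    and A B :: "nat \<Rightarrow> complex mat"
    and \<psi>1 \<psi>2 :: "complex vec"
    and F :: "complex mat"
  assumes hA: "\<And>m. m < p \<Longrightarrow> A m \<in> carrier_mat D1 D1"
    and hB: "\<And>m. m < p \<Longrightarrow> B m \<in> carrier_mat D2 D2"
    and h\<psi>1: "\<psi>1 \<in> carrier_vec D1" "vnorm \<psi>1 = 1"
    and h\<psi>2: "\<psi>2 \<in> carrier_vec D2" "vnorm \<psi>2 = 1"
    and hd: "d \<ge> 1"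
    and hF: "F \<in> carrier_mat (p ^ d) (p ^ d)"
  shows "(vnorm (mat_adjoint (E_F D1 D2 p d A B F) *\<^sub>v kron_vec \<psi>1 \<psi>2)
           \<le> opnorm F * sqrt (opnorm (transfer D1 p A ^\<^sub>m d) * opnorm (transfer D2 p B ^\<^sub>m d))) \<and>
         (vnorm (E_F D1 D2 p d A B F *\<^sub>v kron_vec \<psi>1 \<psi>2)
           \<le> opnorm F * sqrt (opnorm (transfer D1 p A ^\<^sub>m d) * opnorm (transfer D2 p B ^\<^sub>m d))) \<and>
         (frob (E_F D1 D2 p d A B F)
           \<le> real (D1 * D2) * opnorm F * sqrt (opnorm (transfer D1 p A ^\<^sub>m d) * opnorm (transfer D2 p B ^\<^sub>m d)))"
proof -
  have c1: "vnorm (mat_adjoint (E_F D1 D2 p d A B F) *\<^sub>v kron_vec \<psi>1 \<psi>2)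
           \<le> opnorm F * sqrt (opnorm (transfer D1 p A ^\<^sub>m d) * opnorm (transfer D2 p B ^\<^sub>m d))"
    by (rule adj_claim[OF hA hB h\<psi>1 h\<psi>2 hd hF])
  have c2: "vnorm (E_F D1 D2 p d A B F *\<^sub>v kron_vec \<psi>1 \<psi>2)
           \<le> opnorm F * sqrt (opnorm (transfer D1 p A ^\<^sub>m d) * opnorm (transfer D2 p B ^\<^sub>m d))"
    by (rule vec_claim[OF hA hB h\<psi>1 h\<psi>2 hd hF])
  have c3: "frob (E_F D1 D2 p d A B F)
           \<le> real (D1 * D2) * opnorm F * sqrt (opnorm (transfer D1 p A ^\<^sub>m d) * opnorm (transfer D2 p B ^\<^sub>m d))"
    by (rule frob_claim[OF hA hB hd hF])
  show ?thesis using c1 c2 c3 by blast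
qed

end
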